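(* Let $A=\bigoplus_{k\ge0}A_k$ be an affine (finitely generated) graded integral domain over a field $F$ with $A_0=F$. Then for any $F$-subalgebra $R$ of $A$ we have $\mathrm{tr.deg}_F\,\tilde R=\mathrm{tr.deg}_F\,R$.
   Context: For $a\in A$, $\tilde a$ denotes the initial (lowest-degree nonzero homogeneous) component of $a$, with $\tilde 0=0$; $\tilde R$ is the $F$-span of all $\tilde r$, $r\in R$ (a graded subalgebra of $A$). *)

theory Defs
  imports Main "HOL-Library.Extended_Nat"
begin

text \<open>The ambient ring A is the whole type 'a (an integral domain). The base field F
  is the degree-0 part A_0, a subfield of A. A grading is a family Ak :: nat => 'a set.\<close>

definition is_subfield :: "'a::idom set \<Rightarrow> bool" where
  "is_subfield F \<longleftrightarrow> 0 \<in> F \<and> 1 \<in> F \<and>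
     (\<forall>x\<in>F. \<forall>y\<in>F. x + y \<in> F \<and> x * y \<in> F \<and> - x \<in> F) \<and>
     (\<forall>x\<in>F. x \<noteq> 0 \<longrightarrow> (\<exists>y\<in>F. x * y = 1))"

definition is_subalgebra :: "'a::idom set \<Rightarrow> 'a set \<Rightarrow> bool" where
  "is_subalgebra F R \<longleftrightarrow> F \<subseteq> R \<and>
     (\<forall>x\<in>R. \<forall>y\<in>R. x + y \<in> R \<and> x * y \<in> R \<and> - x \<in> R)"

inductive_set gen_alg :: "'a::idom set \<Rightarrow> 'a set \<Rightarrow> 'a set" for F G where
  base_F: "c \<in> F \<Longrightarrow> c \<in> gen_alg F G"
| base_G: "g \<in> G \<Longrightarrow> g \<in> gen_alg F G"
| add: "x \<in> gen_alg F G \<Longrightarrow> y \<in> gen_alg F G \<Longrightarrow> x + y \<in> gen_alg F G"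
| mult: "x \<in> gen_alg F G \<Longrightarrow> y \<in> gen_alg F G \<Longrightarrow> x * y \<in> gen_alg F G"
| neg: "x \<in> gen_alg F G \<Longrightarrow> - x \<in> gen_alg F G"

definition affine_graded_domain :: "(nat \<Rightarrow> 'a::idom set) \<Rightarrow> bool" where
  "affine_graded_domain Ak \<longleftrightarrow>
     is_subfield (Ak 0) \<and>
     (\<forall>k. 0 \<in> Ak k \<and> (\<forall>x\<in>Ak k. \<forall>y\<in>Ak k. x + y \<in> Ak k) \<and>
          (\<forall>c\<in>Ak 0. \<forall>x\<in>Ak k. c * x \<in> Ak k)) \<and>
     (\<forall>i j. \<forall>x\<in>Ak i. \<forall>y\<in>Ak j. x * y \<in> Ak (i + j)) \<and>
     (\<forall>a. \<exists>!c :: nat \<Rightarrow> 'a. (\<forall>k. c k \<in> Ak k) \<and> finite {k. c k \<noteq> 0} \<and>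
            a = (\<Sum>k\<in>{k. c k \<noteq> 0}. c k)) \<and>
     (\<exists>G. finite G \<and> gen_alg (Ak 0) G = UNIV)"

definition hcomp :: "(nat \<Rightarrow> 'a::idom set) \<Rightarrow> 'a \<Rightarrow> nat \<Rightarrow> 'a" where
  "hcomp Ak a = (THE c. (\<forall>k. c k \<in> Ak k) \<and> finite {k. c k \<noteq> 0} \<and>
            a = (\<Sum>k\<in>{k. c k \<noteq> 0}. c k))"

definition initial :: "(nat \<Rightarrow> 'a::idom set) \<Rightarrow> 'a \<Rightarrow> 'a" where
  "initial Ak a = (if a = 0 then 0 else hcomp Ak a (LEAST k. hcomp Ak a k \<noteq> 0))"

definition Fspan :: "'a::idom set \<Rightarrow> 'a set \<Rightarrow> 'a set" where
  "Fspan F S = {x. \<exists>(n::nat) c v. (\<forall>i<n. c i \<in> F \<and> v i \<in> S) \<and> x = (\<Sum>i<n. c i * v i)}"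

text \<open>Algebraic independence over F: for every finite subset T of S, distinct
  monomials in the elements of T are F-linearly independent.\<close>
definition alg_indep :: "'a::idom set \<Rightarrow> 'a set \<Rightarrow> bool" where
  "alg_indep F S \<longleftrightarrow>
     (\<forall>T E c. finite T \<and> T \<subseteq> S \<and> finite E \<and>
        (\<forall>e\<in>E. \<forall>s. s \<notin> T \<longrightarrow> e s = 0) \<and> (\<forall>e\<in>E. c e \<in> F) \<and>
        (\<Sum>e\<in>E. c e * (\<Prod>s\<in>T. s ^ e s)) = 0 \<longrightarrow> (\<forall>e\<in>E. c e = 0))"

definition trdeg :: "'a::idom set \<Rightarrow> 'a set \<Rightarrow> enat" where
  "trdeg F R = Sup {enat (card S) | S. finite S \<and> S \<subseteq> R \<and> alg_indep F S}"

end

theory Submission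
  imports Defs "Jordan_Normal_Form.Determinant" "Jordan_Normal_Form.Char_Poly"
begin

definition subr :: "'b::comm_ring_1 set \<Rightarrow> bool" where
  "subr C \<longleftrightarrow> 0 \<in> C \<and> 1 \<in> C \<and> (\<forall>x\<in>C. \<forall>y\<in>C. x + y \<in> C \<and> x * y \<in> C \<and> - x \<in> C)"

lemma subrD:
  assumes "subr C"
  shows "0 \<in> C" "1 \<in> C" "x \<in> C \<Longrightarrow> y \<in> C \<Longrightarrow> x + y \<in> C"
    "x \<in> C \<Longrightarrow> y \<in> C \<Longrightarrow> x * y \<in> C" "x \<in> C \<Longrightarrow> - x \<in> C"
  using assms unfolding subr_def by auto

lemma subr_diff: "subr C \<Longrightarrow> x \<in> C \<Longrightarrow> y \<in> C \<Longrightarrow> x - y \<in> C"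
  using subrD[of C] by (metis diff_conv_add_uminus)

lemma subr_sum: assumes "subr C" "\<And>i. i \<in> I \<Longrightarrow> f i \<in> C" shows "sum f I \<in> C"
proof (cases "finite I")
  case True
  then show ?thesis using assms(2)
    by (induction I rule: finite_induct) (auto intro: subrD[OF assms(1)])
qed (simp add: subrD[OF assms(1)])

lemma subr_prod: assumes "subr C" "\<And>i. i \<in> I \<Longrightarrow> f i \<in> C" shows "prod f I \<in> C"
proof (cases "finite I")
  case True
  then show ?thesis using assms(2)
    by (induction I rule: finite_induct) (auto intro: subrD[OF assms(1)])
qed (simp add: subrD[OF assms(1)])

lemma subr_power: "subr C \<Longrightarrow> x \<in> C \<Longrightarrow> x ^ n \<in> C"
  by (induction n) (auto intro: subrD)

lemma det_in_subr:
  fixes A :: "'b::comm_ring_1 mat"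
  assumes S: "subr S" and A: "A \<in> carrier_mat n n"
    and e: "\<And>i j. i < n \<Longrightarrow> j < n \<Longrightarrow> A $$ (i,j) \<in> S"
  shows "det A \<in> S"
proof -
  have "det A = (\<Sum>p | p permutes {0..<n}. of_int (sign p) * (\<Prod>i = 0..<n. A $$ (i, p i)))"
    using det_def'[OF A] .
  also have "\<dots> \<in> S"
  proof (rule subr_sum[OF S])
    fix p assume p: "p \<in> {p. p permutes {0..<n}}"
    have s: "of_int (sign p) \<in> S"
      unfolding sign_def using subrD[OF S] by auto
    have "(\<Prod>i = 0..<n. A $$ (i, p i)) \<in> S"
    proof (rule subr_prod[OF S])
      fix i assume i: "i \<in> {0..<n}"
      then have "p i \<in> {0..<n}" using p by (simp add: permutes_in_image)
      then show "A $$ (i, p i) \<in> S" using e i by auto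
    qed
    then show "of_int (sign p) * (\<Prod>i = 0..<n. A $$ (i, p i)) \<in> S"
      using s subrD(4)[OF S] by blast
  qed
  finally show ?thesis .
qed

definition pc :: "'b::comm_ring_1 set \<Rightarrow> 'b poly \<Rightarrow> bool" where
  "pc C p \<longleftrightarrow> (\<forall>i. coeff p i \<in> C)"

lemma subr_pc: assumes "subr C" shows "subr {p. pc C p}"
proof -
  note S = subrD[OF assms]
  have "pc C 0" "pc C 1" unfolding pc_def using S by (auto simp: coeff_1)
  moreover have "pc C (x + y)" "pc C (x * y)" "pc C (- x)" if "pc C x" "pc C y" for x y
    using that unfolding pc_def coeff_mult
    by (auto intro!: subr_sum[OF assms] S(3,4,5))
  ultimately show ?thesis unfolding subr_def by auto
qed

lemma pc_const: "subr C \<Longrightarrow> c \<in> C \<Longrightarrow> pc C [:c:]"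
  unfolding pc_def using subrD by (auto simp: coeff_pCons split: nat.splits)

lemma pc_X: "subr C \<Longrightarrow> pc C [:0,1:]"
  unfolding pc_def using subrD by (auto simp: coeff_pCons split: nat.splits)

lemma pc_lin: "subr C \<Longrightarrow> c \<in> C \<Longrightarrow> pc C [:c,1:]"
  unfolding pc_def using subrD by (auto simp: coeff_pCons split: nat.splits)

definition alg :: "'b::comm_ring_1 set \<Rightarrow> 'b \<Rightarrow> bool" where
  "alg C x \<longleftrightarrow> (\<exists>p. p \<noteq> 0 \<and> pc C p \<and> poly p x = 0)"

lemma alg_mono: "C \<subseteq> D \<Longrightarrow> alg C x \<Longrightarrow> alg D x"
  unfolding alg_def pc_def by blast

lemma alg_base: assumes "subr C" "b \<in> C" shows "alg C b"
proof -
  have "pc C [:-b,1:]" using pc_lin[OF assms(1) subrD(5)[OF assms]] .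
  then show ?thesis unfolding alg_def by (intro exI[of _ "[:-b,1:]"]) auto
qed

lemma pc_pcompose_lin:
  assumes "subr C" "pc C p" "d \<in> C"
  shows "pc C (pcompose p [:0,d:])"
  using assms unfolding pc_def coeff_pcompose_linear
  by (auto intro: subrD(4)[OF assms(1)] subr_power[OF assms(1)])

lemma DT:
  fixes x :: "'b::idom" and k :: nat and v :: "nat \<Rightarrow> 'b"
  assumes B: "subr B" and d: "d \<in> B" "d \<noteq> 0"
    and M: "\<And>i j. i < k \<Longrightarrow> j < k \<Longrightarrow> M i j \<in> B"
    and rel: "\<And>i. i < k \<Longrightarrow> d * x * v i = (\<Sum>j<k. M i j * v j)"
    and io: "io < k" "v io \<noteq> 0"
  shows "alg B x"
proof -
  define Mm where "Mm = mat k k (\<lambda>(i,j). M i j)"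
  have Mc: "Mm \<in> carrier_mat k k" unfolding Mm_def by simp
  define Q where "Q = char_poly Mm"
  define N where "N = mat k k (\<lambda>(i,j). (if i = j then d * x else 0) - M i j)"
  have Nc: "N \<in> carrier_mat k k" unfolding N_def by simp
  have CPc: "char_poly_matrix Mm \<in> carrier_mat k k" using Mc by simp
  have cpm: "char_poly_matrix Mm $$ (i,j) = (if i = j then [:0,1:] else 0) + [:- M i j:]"
    if "i < k" "j < k" for i j
    using that unfolding char_poly_matrix_def Mm_def by simp
  have PQ: "poly Q (d * x) = det N"
    unfolding Q_def char_poly_def
    by (rule poly_det_cong[OF Nc CPc]) (simp add: cpm N_def)
  have Nv: "N *\<^sub>v vec k v = 0\<^sub>v k"
  proof (rule eq_vecI)
    fix i assume i: "i < dim_vec (0\<^sub>v k :: 'b vec)"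
    then have i: "i < k" by simp
    have "(N *\<^sub>v vec k v) $ i = (\<Sum>j<k. ((if i = j then d * x else 0) - M i j) * v j)"
      using i unfolding N_def by (simp add: scalar_prod_def atLeast0LessThan)
    also have "\<dots> = (\<Sum>j<k. (if i = j then d * x * v j else 0)) - (\<Sum>j<k. M i j * v j)"
    proof -
      have "((if i = j then d * x else 0) - M i j) * v j = (if i = j then d * x * v j else 0) - M i j * v j" for j
        by (simp add: left_diff_distrib)
      then show ?thesis by (simp add: sum_subtractf)
    qed
    also have "\<dots> = d * x * v i - (\<Sum>j<k. M i j * v j)"
      using i by simp
    also have "\<dots> = 0" using rel[OF i] by simp
    finally show "(N *\<^sub>v vec k v) $ i = 0\<^sub>v k $ i" using i by simp
  qed (use Nc in auto)
  have "(adj_mat N * N) *\<^sub>v vec k v = adj_mat N *\<^sub>v (N *\<^sub>v vec k v)"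
    using adj_mat[OF Nc] Nc by (intro assoc_mult_mat_vec) auto
  also have "\<dots> = 0\<^sub>v k" unfolding Nv
    by (rule eq_vecI) (use adj_mat(1)[OF Nc] in \<open>auto simp: row_def\<close>)
  finally have "(det N \<cdot>\<^sub>m 1\<^sub>m k) *\<^sub>v vec k v = 0\<^sub>v k" using adj_mat[OF Nc] by simp
  then have "((det N \<cdot>\<^sub>m 1\<^sub>m k) *\<^sub>v vec k v) $ io = 0" using io by simp
  then have "(\<Sum>i<k. det N * (if i = io then 1 else 0) * v i) = 0" using io by (simp add: scalar_prod_def atLeast0LessThan)
  moreover have "(\<Sum>i<k. det N * (if i = io then 1 else 0) * v i) = (\<Sum>i<k. if i = io then det N * v i else 0)"
    by (rule sum.cong) auto
  ultimately have "det N * v io = 0" using io by simp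
  then have dN: "det N = 0" using io by simp
  define P where "P = pcompose Q [:0,d:]"
  have degQ: "coeff Q k = 1" using degree_monic_char_poly[OF Mc] unfolding Q_def by simp
  have "coeff P k = d ^ k" unfolding P_def coeff_pcompose_linear degQ by simp
  then have "P \<noteq> 0" using d by auto
  moreover have "poly P x = 0" unfolding P_def poly_pcompose using PQ dN by (simp add: mult.commute)
  moreover have "pc B Q"
  proof -
    have "Q \<in> {p. pc B p}" unfolding Q_def char_poly_def
    proof (rule det_in_subr[OF subr_pc[OF B] CPc])
      fix i j assume "i < k" "j < k"
      then show "char_poly_matrix Mm $$ (i,j) \<in> {p. pc B p}"
        unfolding cpm[OF \<open>i<k\<close> \<open>j<k\<close>] using subrD[OF subr_pc[OF B]] pc_X[OF B]
          pc_const[OF B subrD(5)[OF B M]] by auto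
    qed
    then show ?thesis by simp
  qed
  then have "pc B P" unfolding P_def using pc_pcompose_lin[OF B _ d(1)] by blast
  ultimately show ?thesis unfolding alg_def by blast
qed


inductive_set bspan :: "'b::comm_ring_1 set \<Rightarrow> 'b set \<Rightarrow> 'b set" for B V where
  bz: "0 \<in> bspan B V"
| bs: "v \<in> V \<Longrightarrow> b \<in> B \<Longrightarrow> b * v \<in> bspan B V"
| ba: "x \<in> bspan B V \<Longrightarrow> y \<in> bspan B V \<Longrightarrow> x + y \<in> bspan B V"

lemma bspan_mem: "subr B \<Longrightarrow> v \<in> V \<Longrightarrow> v \<in> bspan B V"
  using bs[of v V 1 B] subrD(2) by auto

lemma bspan_smult: assumes "subr B" "b \<in> B" "x \<in> bspan B V" shows "b * x \<in> bspan B V"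
  using assms(3)
proof induction
  case bz then show ?case by (simp add: bspan.bz)
next
  case (bs v c) then show ?case using bspan.bs[of v V "b * c" B] subrD(4)[OF assms(1,2)]
    by (simp add: mult.assoc)
next
  case (ba x y) then show ?case by (simp add: distrib_left bspan.ba)
qed

lemma bspan_sum: assumes "\<And>i. i \<in> I \<Longrightarrow> f i \<in> bspan B V" shows "sum f I \<in> bspan B V"
proof (cases "finite I")
  case True then show ?thesis using assms
    by (induction I rule: finite_induct) (auto intro: bspan.intros)
qed (simp add: bspan.bz)

lemma bspan_closed_mult:
  assumes "\<And>v. v \<in> V \<Longrightarrow> z * v \<in> bspan B V" "subr B" "y \<in> bspan B V"
  shows "z * y \<in> bspan B V"
  using assms(3)
proof induction
  case bz then show ?case by (simp add: bspan.bz)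
next
  case (bs v b) then show ?case using bspan_smult[OF assms(2) bs(2) assms(1)[OF bs(1)]]
    by (simp add: mult.left_commute)
next
  case (ba x y) then show ?case by (simp add: distrib_left bspan.ba)
qed

lemma bspan_mult:
  assumes "subr B" "\<And>v w. v \<in> V \<Longrightarrow> w \<in> W \<Longrightarrow> v * w \<in> bspan B U"
    "x \<in> bspan B V" "y \<in> bspan B W"
  shows "x * y \<in> bspan B U"
  using assms(3)
proof induction
  case bz then show ?case by (simp add: bspan.bz)
next
  case (bs v b)
  have "v * y \<in> bspan B U" using assms(4)
  proof induction
    case bz then show ?case by (simp add: bspan.bz)
  next
    case (bs w c) then show ?case using bspan_smult[OF assms(1) bs(2) assms(2)[OF \<open>v \<in> V\<close> bs(1)]]
      by (simp add: mult.left_commute)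
  next
    case (ba x y) then show ?case by (simp add: distrib_left bspan.ba)
  qed
  then show ?case using bspan_smult[OF assms(1) bs(2)] by (simp add: mult.assoc)
next
  case (ba x1 x2) then show ?case by (simp add: distrib_right bspan.ba)
qed

lemma bspan_repr:
  assumes "finite V" "subr B" "x \<in> bspan B V"
  shows "\<exists>g. (\<forall>w. g w \<in> B) \<and> x = (\<Sum>w\<in>V. g w * w)"
  using assms(3)
proof induction
  case bz then show ?case using subrD(1)[OF assms(2)] by (intro exI[of _ "\<lambda>_. 0"]) auto
next
  case (bs v b)
  have "(\<Sum>w\<in>V. (if w = v then b else 0) * w) = (\<Sum>w\<in>V. if w = v then b * w else 0)"
    by (rule sum.cong) auto
  also have "\<dots> = b * v" using bs(1) assms(1) by simp
  finally show ?case using bs(2) subrD(1)[OF assms(2)]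
    by (intro exI[of _ "\<lambda>w. if w = v then b else 0"]) auto
next
  case (ba x y)
  then obtain g1 g2 where "\<forall>w. g1 w \<in> B" "x = (\<Sum>w\<in>V. g1 w * w)" "\<forall>w. g2 w \<in> B" "y = (\<Sum>w\<in>V. g2 w * w)"
    by blast
  then show ?case using subrD(3)[OF assms(2)]
    by (intro exI[of _ "\<lambda>w. g1 w + g2 w"]) (auto simp: sum.distrib distrib_right)
qed

lemma DT_set:
  fixes x :: "'b::idom"
  assumes B: "subr B" and d: "d \<in> B" "d \<noteq> 0" and V: "finite V" "w0 \<in> V" "w0 \<noteq> 0"
    and cl: "\<And>w. w \<in> V \<Longrightarrow> d * x * w \<in> bspan B V"
  shows "alg B x"
proof -
  obtain h where h: "bij_betw h {0..<card V} V" using ex_bij_betw_nat_finite[OF V(1)] by blast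
  define k where "k = card V"
  have "\<forall>i. \<exists>g. i < k \<longrightarrow> (\<forall>w. g w \<in> B) \<and> d * x * h i = (\<Sum>w\<in>V. g w * w)"
  proof
    fix i show "\<exists>g. i < k \<longrightarrow> (\<forall>w. g w \<in> B) \<and> d * x * h i = (\<Sum>w\<in>V. g w * w)"
    proof (cases "i < k")
      case True
      then have "h i \<in> V" using h unfolding k_def bij_betw_def by auto
      then show ?thesis using bspan_repr[OF V(1) B cl] by blast
    qed auto
  qed
  from choice[OF this] obtain G where G: "\<And>i. i < k \<Longrightarrow> (\<forall>w. G i w \<in> B) \<and> d * x * h i = (\<Sum>w\<in>V. G i w * w)"
    by blast
  have re: "(\<Sum>w\<in>V. G i w * w) = (\<Sum>j<k. G i (h j) * h j)" for i
  proof -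
    have "(\<Sum>w\<in>V. G i w * w) = (\<Sum>j\<in>{0..<k}. G i (h j) * h j)"
      using sum.reindex_bij_betw[OF h, of "\<lambda>w. G i w * w"] unfolding k_def by simp
    then show ?thesis by (simp add: atLeast0LessThan)
  qed
  obtain i0 where i0: "i0 < k" "h i0 = w0" using h V(2) unfolding k_def bij_betw_def
    by (metis atLeastLessThan_iff imageE)
  show ?thesis
  proof (rule DT[OF B d, where k=k and M="\<lambda>i j. G i (h j)" and v=h and io=i0])
    show "G i (h j) \<in> B" if "i < k" "j < k" for i j using G[OF that(1)] by blast
    show "d * x * h i = (\<Sum>j<k. G i (h j) * h j)" if "i < k" for i using G[OF that] re[of i] by simp
  qed (use i0 V(3) in auto)
qed

definition intg :: "'b::comm_ring_1 set \<Rightarrow> 'b \<Rightarrow> nat \<Rightarrow> (nat \<Rightarrow> 'b) \<Rightarrow> bool" where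
  "intg B \<xi> s \<beta> \<longleftrightarrow> 1 \<le> s \<and> (\<forall>i. \<beta> i \<in> B) \<and> \<xi> ^ s = (\<Sum>i<s. \<beta> i * \<xi> ^ i)"

lemma intg_pow:
  assumes B: "subr B" and I: "intg B \<xi> s \<beta>"
  shows "\<xi> ^ n \<in> bspan B {\<xi> ^ i | i. i < s}"
proof (induction n)
  case 0
  have "\<exists>i. \<xi> ^ 0 = \<xi> ^ i \<and> i < s" using I unfolding intg_def by (intro exI[of _ 0]) simp
  then have "\<xi> ^ 0 \<in> {\<xi> ^ i | i. i < s}" by simp
  then show ?case by (rule bspan_mem[OF B])
next
  case (Suc n)
  have step: "\<xi> * v \<in> bspan B {\<xi> ^ i | i. i < s}" if vin: "v \<in> {\<xi> ^ i | i. i < s}" for v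
  proof -
    obtain i where i: "i < s" "v = \<xi> ^ i" using vin by blast
    show ?thesis
    proof (cases "Suc i < s")
      case True
      then have "\<xi> ^ Suc i \<in> {\<xi> ^ i | i. i < s}" by blast
      then have "\<xi> ^ Suc i \<in> bspan B {\<xi> ^ i | i. i < s}" by (rule bspan_mem[OF B])
      then show ?thesis using i by simp
    next
      case False
      then have "Suc i = s" using i by simp
      then have "\<xi> * v = (\<Sum>j<s. \<beta> j * \<xi> ^ j)" using i I unfolding intg_def by (metis power_Suc)
      also have "\<dots> \<in> bspan B {\<xi> ^ i | i. i < s}"
      proof (rule bspan_sum)
        fix j assume "j \<in> {..<s}"
        then have "\<xi> ^ j \<in> {\<xi> ^ i | i. i < s}" by blast
        moreover have "\<beta> j \<in> B" using I unfolding intg_def by blast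
        ultimately show "\<beta> j * \<xi> ^ j \<in> bspan B {\<xi> ^ i | i. i < s}" by (rule bs)
      qed
      finally show ?thesis .
    qed
  qed
  have "\<xi> * \<xi> ^ n \<in> bspan B {\<xi> ^ i | i. i < s}" by (rule bspan_closed_mult[OF step B Suc])
  then show ?case by simp
qed

lemma alg_to_intg:
  fixes x :: "'b::idom"
  assumes B: "subr B" and A: "alg B x"
  shows "\<exists>c s \<beta>. c \<in> B \<and> c \<noteq> 0 \<and> intg B (c * x) s \<beta>"
proof -
  obtain p where p: "p \<noteq> 0" "pc B p" "poly p x = 0" using A unfolding alg_def by blast
  define s where "s = degree p"
  define c where "c = coeff p s"
  have c0: "c \<noteq> 0" using p(1) unfolding c_def s_def by simp
  have cB: "c \<in> B" using p(2) unfolding pc_def c_def by simp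
  have "s \<noteq> 0"
  proof
    assume "s = 0"
    then have "poly p x = c" unfolding c_def s_def by (simp add: poly_altdef)
    then show False using p(3) c0 by simp
  qed
  then obtain s' where s': "s = Suc s'" by (cases s) auto
  define \<beta> where "\<beta> i = - coeff p i * c ^ (s' - i)" for i
  have "0 = c ^ s' * poly p x" using p(3) by simp
  also have "\<dots> = (\<Sum>i\<le>s. c ^ s' * coeff p i * x ^ i)"
    unfolding poly_altdef s_def[symmetric] by (simp add: sum_distrib_left mult.assoc)
  also have "\<dots> = (\<Sum>i<s. c ^ s' * coeff p i * x ^ i) + (c * x) ^ s"
    unfolding s' by (simp add: lessThan_Suc_atMost[symmetric] c_def s' power_mult_distrib mult_ac)
  also have "(\<Sum>i<s. c ^ s' * coeff p i * x ^ i) = (\<Sum>i<s. coeff p i * c ^ (s' - i) * (c * x) ^ i)"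
  proof (rule sum.cong)
    fix i assume "i \<in> {..<s}"
    then have "c ^ s' = c ^ (s' - i) * c ^ i" using s' by (simp add: power_add[symmetric])
    then show "c ^ s' * coeff p i * x ^ i = coeff p i * c ^ (s' - i) * (c * x) ^ i"
      by (simp add: power_mult_distrib mult_ac)
  qed simp
  finally have "(c * x) ^ s = (\<Sum>i<s. \<beta> i * (c * x) ^ i)"
    unfolding \<beta>_def by (simp add: sum_negf eq_neg_iff_add_eq_0 add.commute)
  moreover have "\<beta> i \<in> B" for i
    using p(2) cB unfolding \<beta>_def pc_def by (auto intro: subrD[OF B] subr_power[OF B])
  ultimately have "intg B (c * x) s \<beta>" using s' unfolding intg_def by simp
  then show ?thesis using cB c0 by blast
qed


lemma gen_alg_subr: assumes "1 \<in> C" shows "subr (gen_alg C G)"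
proof -
  have m1: "- 1 \<in> gen_alg C G" using assms by (intro gen_alg.neg gen_alg.base_F)
  have "1 + - 1 \<in> gen_alg C G" using gen_alg.add[OF gen_alg.base_F[OF assms] m1] .
  then have "0 \<in> gen_alg C G" by simp
  then show ?thesis unfolding subr_def using assms by (auto intro: gen_alg.intros)
qed

lemma gen_alg_sub: assumes "subr D" "C \<subseteq> D" "G \<subseteq> D" shows "gen_alg C G \<subseteq> D"
proof
  fix x assume "x \<in> gen_alg C G" then show "x \<in> D"
    by induction (use assms subrD[OF assms(1)] in auto)
qed

lemma gen_alg_mono: assumes "C \<subseteq> C'" "G \<subseteq> G'" shows "gen_alg C G \<subseteq> gen_alg C' G'"
proof
  fix x assume "x \<in> gen_alg C G" then show "x \<in> gen_alg C' G'"
    by induction (use assms in \<open>auto intro: gen_alg.intros\<close>)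
qed

lemma gen_alg_base_sub: "C \<subseteq> gen_alg C G" "G \<subseteq> gen_alg C G"
  by (auto intro: gen_alg.intros)

lemma gen_alg_single:
  assumes B: "subr B" and x: "x \<in> gen_alg B {a}"
  shows "\<exists>q. pc B q \<and> x = poly q a"
  using x
proof induction
  case (base_F c) then show ?case using pc_const[OF B] by (intro exI[of _ "[:c:]"]) auto
next
  case (base_G g) then show ?case using pc_X[OF B] by (intro exI[of _ "[:0,1:]"]) auto
next
  case (add x y)
  then obtain q1 q2 where "pc B q1" "x = poly q1 a" "pc B q2" "y = poly q2 a" by blast
  then show ?case using subrD(3)[OF subr_pc[OF B]] by (intro exI[of _ "q1 + q2"]) auto
next
  case (mult x y)
  then obtain q1 q2 where "pc B q1" "x = poly q1 a" "pc B q2" "y = poly q2 a" by blast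
  then show ?case using subrD(4)[OF subr_pc[OF B]] by (intro exI[of _ "q1 * q2"]) auto
next
  case (neg x)
  then obtain q1 where "pc B q1" "x = poly q1 a" by blast
  then show ?case using subrD(5)[OF subr_pc[OF B]] by (intro exI[of _ "- q1"]) auto
qed

lemma alg_add_mult:
  fixes x y :: "'b::idom"
  assumes B: "subr B" and ax: "alg B x" and ay: "alg B y"
  shows "alg B (x + y) \<and> alg B (x * y)"
proof -
  obtain c s \<beta> where c: "c \<in> B" "c \<noteq> 0" and I1: "intg B (c * x) s \<beta>" using alg_to_intg[OF B ax] by blast
  obtain e t \<gamma> where e: "e \<in> B" "e \<noteq> 0" and I2: "intg B (e * y) t \<gamma>" using alg_to_intg[OF B ay] by blast
  define \<xi> where "\<xi> = c * x"
  define \<eta> where "\<eta> = e * y"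
  define V where "V = (\<lambda>(i,j). \<xi> ^ i * \<eta> ^ j) ` ({..<s} \<times> {..<t})"
  have fV: "finite V" unfolding V_def by simp
  have s1: "1 \<le> s" and t1: "1 \<le> t" using I1 I2 unfolding intg_def by auto
  have oneV: "1 \<in> V" unfolding V_def using s1 t1 by (force intro: image_eqI[of _ _ "(0,0)"])
  have all: "\<xi> ^ i * \<eta> ^ j \<in> bspan B V" for i j
  proof (rule bspan_mult[OF B _ intg_pow[OF B I1[folded \<xi>_def]] intg_pow[OF B I2[folded \<eta>_def]]])
    fix v w assume "v \<in> {\<xi> ^ i |i. i < s}" "w \<in> {\<eta> ^ i |i. i < t}"
    then have "v * w \<in> V" unfolding V_def by force
    then show "v * w \<in> bspan B V" by (rule bspan_mem[OF B])
  qed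
  have ce: "c * e \<in> B" "c * e \<noteq> 0" using c e subrD(4)[OF B] by auto
  have "alg B (x + y)"
  proof (rule DT_set[OF B ce fV oneV one_neq_zero])
    fix w assume "w \<in> V"
    then obtain i j where w: "w = \<xi> ^ i * \<eta> ^ j" unfolding V_def by auto
    have "c * e * (x + y) * w = e * (\<xi> ^ Suc i * \<eta> ^ j) + c * (\<xi> ^ i * \<eta> ^ Suc j)"
      unfolding w \<xi>_def \<eta>_def by (simp add: algebra_simps)
    also have "\<dots> \<in> bspan B V"
      by (intro bspan.ba bspan_smult[OF B] all c e)
    finally show "c * e * (x + y) * w \<in> bspan B V" .
  qed
  moreover have "alg B (x * y)"
  proof (rule DT_set[OF B ce fV oneV one_neq_zero])
    fix w assume "w \<in> V"
    then obtain i j where w: "w = \<xi> ^ i * \<eta> ^ j" unfolding V_def by auto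
    have "c * e * (x * y) * w = \<xi> ^ Suc i * \<eta> ^ Suc j"
      unfolding w \<xi>_def \<eta>_def by (simp add: algebra_simps)
    then show "c * e * (x * y) * w \<in> bspan B V" using all[of "Suc i" "Suc j"] by simp
  qed
  ultimately show ?thesis by blast
qed

lemma subr_alg: fixes B :: "'b::idom set" assumes B: "subr B" shows "subr {x. alg B x}"
proof -
  have "alg B (- x)" if "alg B x" for x
  proof -
    have "alg B (-1)" by (rule alg_base[OF B subrD(5)[OF B subrD(2)[OF B]]])
    then have "alg B (x * -1)" using alg_add_mult[OF B that] by blast
    then show ?thesis by simp
  qed
  then show ?thesis unfolding subr_def using alg_add_mult[OF B] alg_base[OF B] subrD[OF B] by auto
qed

lemma alg_scale:
  fixes x :: "'b::idom"
  assumes B: "subr B" and m: "m \<in> B" "m \<noteq> 0" and A: "alg B (m * x)"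
  shows "alg B x"
proof -
  obtain p where p: "p \<noteq> 0" "pc B p" "poly p (m * x) = 0" using A unfolding alg_def by blast
  define P where "P = pcompose p [:0,m:]"
  have "coeff P (degree p) = m ^ degree p * coeff p (degree p)" unfolding P_def coeff_pcompose_linear ..
  then have "P \<noteq> 0" using p(1) m(2) by auto
  moreover have "poly P x = 0" unfolding P_def poly_pcompose using p(3) by (simp add: mult.commute)
  moreover have "pc B P" unfolding P_def by (rule pc_pcompose_lin[OF B p(2) m(1)])
  ultimately show ?thesis unfolding alg_def by blast
qed

lemma poly_alg:
  fixes e :: "'b::idom"
  assumes B: "subr B" and e: "alg B e" and q: "pc B q"
  shows "alg B (poly q e)"
  using q
proof (induction q)
  case 0 then show ?case using alg_base[OF B subrD(1)[OF B]] by simp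
next
  case (pCons a q)
  have a: "a \<in> B" using pCons(3) unfolding pc_def by (metis coeff_pCons_0)
  have "pc B q" using pCons(3) unfolding pc_def by (metis coeff_pCons_Suc)
  then have "alg B (poly q e)" by (rule pCons.IH)
  then have "alg B (e * poly q e)" using alg_add_mult[OF B e] by blast
  then show ?case using alg_add_mult[OF B alg_base[OF B a]] by simp
qed

lemma alg_inv:
  fixes e :: "'b::idom"
  assumes B: "subr B" and e: "alg B e" "e \<noteq> 0"
  shows "\<exists>e' m. alg B e' \<and> m \<in> B \<and> m \<noteq> 0 \<and> e * e' = m"
proof -
  have "\<And>p. p \<noteq> 0 \<Longrightarrow> pc B p \<Longrightarrow> poly p e = 0 \<Longrightarrow> \<exists>e' m. alg B e' \<and> m \<in> B \<and> m \<noteq> 0 \<and> e * e' = m"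
  proof -
    fix p :: "'b poly"
    show "p \<noteq> 0 \<Longrightarrow> pc B p \<Longrightarrow> poly p e = 0 \<Longrightarrow> \<exists>e' m. alg B e' \<and> m \<in> B \<and> m \<noteq> 0 \<and> e * e' = m"
    proof (induction p)
      case 0 then show ?case by simp
    next
      case (pCons a q)
      have a: "a \<in> B" using pCons(4) unfolding pc_def by (metis coeff_pCons_0)
      have qB: "pc B q" using pCons(4) unfolding pc_def by (metis coeff_pCons_Suc)
      have eq: "a + e * poly q e = 0" using pCons(5) by simp
      show ?case
      proof (cases "a = 0")
        case False
        have "alg B (poly q e)" by (rule poly_alg[OF B e(1) qB])
        moreover have "e * poly q e = - a" using eq by (simp add: eq_neg_iff_add_eq_0 add.commute)
        ultimately show ?thesis using False subrD(5)[OF B a] by (intro exI[of _ "poly q e"] exI[of _ "- a"]) auto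
      next
        case True
        then have "q \<noteq> 0" using pCons(3) by auto
        moreover have "poly q e = 0" using eq True e(2) by simp
        ultimately show ?thesis using pCons.IH qB by blast
      qed
    qed
  qed
  then show ?thesis using e(1) unfolding alg_def by blast
qed


lemma alg_gen_alg:
  fixes B :: "'b::idom set"
  assumes B: "subr B" and K: "\<And>a. a \<in> K \<Longrightarrow> alg B a"
  shows "gen_alg B K \<subseteq> {x. alg B x}"
  by (rule gen_alg_sub[OF subr_alg[OF B]]) (use alg_base[OF B] K in auto)

lemma trans1:
  fixes x a :: "'b::idom"
  assumes B: "subr B" and a: "alg B a" and X: "alg (gen_alg B {a}) x"
  shows "alg B x"
proof -
  define B' where "B' = gen_alg B {a}"
  have B': "subr B'" unfolding B'_def by (rule gen_alg_subr[OF subrD(2)[OF B]])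
  obtain e s \<beta> where e: "e \<in> B'" "e \<noteq> 0" and I: "intg B' (e * x) s \<beta>"
    using alg_to_intg[OF B' X[folded B'_def]] by blast
  obtain c t \<gamma> where c: "c \<in> B" "c \<noteq> 0" and J: "intg B (c * a) t \<gamma>"
    using alg_to_intg[OF B a] by blast
  define \<alpha> where "\<alpha> = c * a"
  define \<xi> where "\<xi> = e * x"
  have "\<forall>i. \<exists>r. pc B r \<and> \<beta> i = poly r a"
    using I gen_alg_single[OF B] unfolding intg_def B'_def by blast
  from choice[OF this] obtain r where r: "\<And>i. pc B (r i) \<and> \<beta> i = poly (r i) a" by blast
  define N where "N = (\<Sum>i<s. degree (r i))"
  define D where "D = c ^ N"
  have DB: "D \<in> B" "D \<noteq> 0" unfolding D_def using c subr_power[OF B] by auto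
  let ?A = "{\<alpha> ^ j | j. j < t}"
  have Apow: "\<alpha> ^ n \<in> bspan B ?A" for n unfolding \<alpha>_def by (rule intg_pow[OF B J])
  have C1: "D * \<beta> i \<in> bspan B ?A" if i: "i < s" for i
  proof -
    have dN: "degree (r i) \<le> N" unfolding N_def using i by (intro member_le_sum) auto
    have "D * \<beta> i = (\<Sum>k\<le>degree (r i). c ^ N * (coeff (r i) k * a ^ k))"
      unfolding D_def using r[of i] by (simp add: poly_altdef sum_distrib_left)
    also have "\<dots> = (\<Sum>k\<le>degree (r i). (coeff (r i) k * c ^ (N - k)) * \<alpha> ^ k)"
    proof (rule sum.cong)
      fix k assume "k \<in> {..degree (r i)}"
      then have "c ^ N = c ^ (N - k) * c ^ k" using dN by (simp add: power_add[symmetric])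
      then show "c ^ N * (coeff (r i) k * a ^ k) = (coeff (r i) k * c ^ (N - k)) * \<alpha> ^ k"
        unfolding \<alpha>_def by (simp add: power_mult_distrib mult_ac)
    qed simp
    also have "\<dots> \<in> bspan B ?A"
    proof (rule bspan_sum)
      fix k
      have "coeff (r i) k * c ^ (N - k) \<in> B"
        using r[of i] c subr_power[OF B] subrD(4)[OF B] unfolding pc_def by blast
      then show "coeff (r i) k * c ^ (N - k) * \<alpha> ^ k \<in> bspan B ?A"
        by (rule bspan_smult[OF B _ Apow])
    qed
    finally show ?thesis .
  qed
  define V where "V = (\<lambda>(j,i). \<alpha> ^ j * \<xi> ^ i) ` ({..<t} \<times> {..<s})"
  have fV: "finite V" unfolding V_def by simp
  have s1: "1 \<le> s" and t1: "1 \<le> t" using I J unfolding intg_def by auto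
  have oneV: "1 \<in> V" unfolding V_def using s1 t1 by (force intro: image_eqI[of _ _ "(0,0)"])
  have C2: "u * \<xi> ^ i \<in> bspan B V" if u: "u \<in> bspan B ?A" and i: "i < s" for u i
  proof (rule bspan_mult[OF B _ u bspan_mem[OF B, of "\<xi> ^ i" "{\<xi> ^ i}"]])
    fix v w assume "v \<in> ?A" "w \<in> {\<xi> ^ i}"
    then have "v * w \<in> V" unfolding V_def using i by force
    then show "v * w \<in> bspan B V" by (rule bspan_mem[OF B])
  qed simp
  have "alg B \<xi>"
  proof (rule DT_set[OF B DB fV oneV one_neq_zero])
    fix w assume "w \<in> V"
    then obtain j i where w: "w = \<alpha> ^ j * \<xi> ^ i" "j < t" "i < s" unfolding V_def by auto
    show "D * \<xi> * w \<in> bspan B V"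
    proof (cases "Suc i < s")
      case True
      have "\<alpha> ^ j * \<xi> ^ Suc i \<in> V" unfolding V_def using True w(2) by force
      then have "D * (\<alpha> ^ j * \<xi> ^ Suc i) \<in> bspan B V"
        by (intro bspan_smult[OF B DB(1)] bspan_mem[OF B])
      then show ?thesis unfolding w by (simp add: mult_ac)
    next
      case False
      then have si: "s = Suc i" using w(3) by simp
      have hs: "\<xi> ^ s = (\<Sum>i'<s. \<beta> i' * \<xi> ^ i')" using I unfolding intg_def \<xi>_def by blast
      have "D * \<xi> * w = (D * \<alpha> ^ j) * \<xi> ^ s" unfolding w si by (simp add: mult_ac)
      also have "\<dots> = (\<Sum>i'<s. ((D * \<beta> i') * \<alpha> ^ j) * \<xi> ^ i')"
        unfolding hs by (simp add: sum_distrib_left mult_ac)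
      also have "\<dots> \<in> bspan B V"
      proof (rule bspan_sum)
        fix i' assume "i' \<in> {..<s}"
        then have i': "i' < s" by simp
        have "(D * \<beta> i') * \<alpha> ^ j \<in> bspan B ?A"
        proof (rule bspan_mult[OF B _ C1[OF i'] Apow])
          fix v w assume "v \<in> ?A" "w \<in> ?A"
          then obtain j1 j2 where "v = \<alpha> ^ j1" "w = \<alpha> ^ j2" by blast
          then show "v * w \<in> bspan B ?A" using Apow[of "j1 + j2"] by (simp add: power_add)
        qed
        then show "(D * \<beta> i') * \<alpha> ^ j * \<xi> ^ i' \<in> bspan B V" by (rule C2[OF _ i'])
      qed
      finally show ?thesis .
    qed
  qed
  have "e \<in> {x. alg B x}" using alg_gen_alg[OF B, of "{a}"] a e(1) unfolding B'_def by blast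
  then obtain e' m where em: "alg B e'" "m \<in> B" "m \<noteq> 0" "e * e' = m"
    using alg_inv[OF B _ e(2)] by blast
  have "m * x = e' * \<xi>" unfolding \<xi>_def em(4)[symmetric] by (simp add: mult_ac)
  then have "alg B (m * x)" using alg_add_mult[OF B em(1) \<open>alg B \<xi>\<close>] by simp
  then show ?thesis by (rule alg_scale[OF B em(2,3)])
qed

lemma trans_set:
  fixes x :: "'b::idom"
  assumes B: "subr B" and K: "finite K" "\<And>a. a \<in> K \<Longrightarrow> alg B a"
    and X: "alg (gen_alg B K) x"
  shows "alg B x"
  using K X
proof (induction K rule: finite_induct)
  case empty
  have "gen_alg B {} \<subseteq> B" by (rule gen_alg_sub[OF B]) auto
  then show ?case using empty alg_mono by blast
next
  case (insert a K)
  have BK: "subr (gen_alg B K)" by (rule gen_alg_subr[OF subrD(2)[OF B]])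
  have BKa: "subr (gen_alg (gen_alg B K) {a})" by (rule gen_alg_subr[OF subrD(2)[OF BK]])
  have "gen_alg B (insert a K) \<subseteq> gen_alg (gen_alg B K) {a}"
  proof (rule gen_alg_sub[OF BKa])
    show "B \<subseteq> gen_alg (gen_alg B K) {a}"
      using gen_alg_base_sub(1)[of B K] gen_alg_base_sub(1)[of "gen_alg B K" "{a}"] by blast
    show "insert a K \<subseteq> gen_alg (gen_alg B K) {a}"
      using gen_alg_base_sub(2)[of K B] gen_alg_base_sub(1)[of "gen_alg B K" "{a}"]
        gen_alg_base_sub(2)[of "{a}" "gen_alg B K"] by blast
  qed
  then have "alg (gen_alg (gen_alg B K) {a}) x" using insert(5) alg_mono by blast
  moreover have "alg (gen_alg B K) a" using insert(4) alg_mono[OF gen_alg_base_sub(1)] by blast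
  ultimately have "alg (gen_alg B K) x" using trans1[OF BK] by blast
  then show ?case using insert by blast
qed

lemma trans_full:
  fixes x :: "'b::idom"
  assumes B: "subr B" and X: "alg {y. alg B y} x"
  shows "alg B x"
proof -
  obtain p where p: "p \<noteq> 0" "pc {y. alg B y} p" "poly p x = 0" using X unfolding alg_def by blast
  define K where "K = coeff p ` {..degree p}"
  have K: "finite K" "\<And>a. a \<in> K \<Longrightarrow> alg B a" using p(2) unfolding K_def pc_def by auto
  have "pc (gen_alg B K) p" unfolding pc_def
  proof
    fix i show "coeff p i \<in> gen_alg B K"
    proof (cases "i \<le> degree p")
      case True then show ?thesis unfolding K_def by (auto intro: gen_alg.base_G)
    next
      case False then have "coeff p i = 0" by (simp add: coeff_eq_0)
      then show ?thesis using subrD(1)[OF gen_alg_subr[OF subrD(2)[OF B]]] by simp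
    qed
  qed
  then have "alg (gen_alg B K) x" using p unfolding alg_def by blast
  then show ?thesis using trans_set[OF B K(1) K(2)] by blast
qed


definition mnm :: "'a::idom set \<Rightarrow> ('a \<Rightarrow> nat) \<Rightarrow> 'a" where
  "mnm T e = (\<Prod>s\<in>T. s ^ e s)"

definition indepC :: "'a::idom set \<Rightarrow> 'a set \<Rightarrow> bool" where
  "indepC C T \<longleftrightarrow> (\<forall>E c. finite E \<and> (\<forall>e\<in>E. \<forall>s. s \<notin> T \<longrightarrow> e s = 0) \<and> (\<forall>e\<in>E. c e \<in> C) \<and>
      (\<Sum>e\<in>E. c e * mnm T e) = 0 \<longrightarrow> (\<forall>e\<in>E. c e = 0))"

lemma indepCD:
  assumes "indepC C T" "finite E" "\<And>e s. e \<in> E \<Longrightarrow> s \<notin> T \<Longrightarrow> e s = 0" "\<And>e. e \<in> E \<Longrightarrow> c e \<in> C"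
    "(\<Sum>e\<in>E. c e * mnm T e) = 0" "e \<in> E"
  shows "c e = 0"
proof -
  have h: "finite E \<and> (\<forall>e\<in>E. \<forall>s. s \<notin> T \<longrightarrow> e s = 0) \<and> (\<forall>e\<in>E. c e \<in> C) \<and> (\<Sum>e\<in>E. c e * mnm T e) = 0"
    using assms(2-5) by blast
  have "\<forall>e\<in>E. c e = 0" using assms(1) h unfolding indepC_def by (elim allE[of _ E] allE[of _ c]) (erule mp)
  then show ?thesis using assms(6) by simp
qed

lemma indepCI:
  assumes "\<And>E c e. finite E \<Longrightarrow> (\<And>e s. e \<in> E \<Longrightarrow> s \<notin> T \<Longrightarrow> e s = 0) \<Longrightarrow> (\<And>e. e \<in> E \<Longrightarrow> c e \<in> C) \<Longrightarrow>
    (\<Sum>e\<in>E. c e * mnm T e) = 0 \<Longrightarrow> e \<in> E \<Longrightarrow> c e = 0"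
  shows "indepC C T"
  unfolding indepC_def
proof (intro allI impI ballI)
  fix E c e assume h: "finite E \<and> (\<forall>e\<in>E. \<forall>s. s \<notin> T \<longrightarrow> e s = 0) \<and> (\<forall>e\<in>E. c e \<in> C) \<and> (\<Sum>e\<in>E. c e * mnm T e) = 0"
    and e: "e \<in> E"
  show "c e = 0" by (rule assms) (use h e in auto)
qed

lemma indep_idx:
  assumes ind: "indepC C T" and I: "finite I" "inj_on ex I"
    and sp: "\<And>i s. i \<in> I \<Longrightarrow> s \<notin> T \<Longrightarrow> ex i s = 0" and cC: "\<And>i. i \<in> I \<Longrightarrow> c i \<in> C"
    and sum0: "(\<Sum>i\<in>I. c i * mnm T (ex i)) = 0" and i: "i \<in> I"
  shows "c i = 0"
proof -
  define c' where "c' e = c (the_inv_into I ex e)" for e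
  have c'i: "c' (ex j) = c j" if "j \<in> I" for j unfolding c'_def using the_inv_into_f_f[OF I(2) that] by simp
  have "(\<Sum>e\<in>ex ` I. c' e * mnm T e) = (\<Sum>j\<in>I. c' (ex j) * mnm T (ex j))"
    by (rule sum.reindex[OF I(2), unfolded comp_def])
  also have "\<dots> = (\<Sum>j\<in>I. c j * mnm T (ex j))" by (rule sum.cong[OF refl]) (simp add: c'i)
  also have "\<dots> = 0" by (rule sum0)
  finally have s0: "(\<Sum>e\<in>ex ` I. c' e * mnm T e) = 0" .
  have "c' (ex i) = 0"
  proof (rule indepCD[OF ind _ _ _ s0])
    show "finite (ex ` I)" using I(1) by simp
    show "ex i \<in> ex ` I" using i by simp
    show "e s = 0" if h: "e \<in> ex ` I" "s \<notin> T" for e s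
    proof -
      obtain j where j: "j \<in> I" "e = ex j" using h(1) by blast
      show ?thesis unfolding j(2) by (rule sp[OF j(1) h(2)])
    qed
    show "c' e \<in> C" if h: "e \<in> ex ` I" for e
    proof -
      obtain j where j: "j \<in> I" "e = ex j" using h(1) by blast
      show ?thesis unfolding j(2) c'i[OF j(1)] by (rule cC[OF j(1)])
    qed
  qed
  then show ?thesis using c'i[OF i] by simp
qed

lemma indep_mono_coef: assumes "C \<subseteq> D" "indepC D T" shows "indepC C T"
proof (rule indepCI)
  fix E c e assume "finite E" "\<And>e s. e \<in> E \<Longrightarrow> s \<notin> T \<Longrightarrow> e s = 0" "\<And>e. e \<in> E \<Longrightarrow> c e \<in> C"
    "(\<Sum>e\<in>E. c e * mnm T e) = 0" "e \<in> E"
  then show "c e = 0" using indepCD[OF assms(2), of E c e] assms(1) by blast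
qed

lemma mon_sub:
  assumes "finite S" "T \<subseteq> S" "\<And>s. s \<notin> T \<Longrightarrow> e s = 0"
  shows "mnm S e = mnm T e"
  unfolding mnm_def by (rule prod.mono_neutral_right) (use assms in auto)

lemma indep_mono_set:
  assumes "finite S" "T \<subseteq> S" "indepC C S" shows "indepC C T"
proof (rule indepCI)
  fix E c e assume E: "finite E" and sp: "\<And>e s. e \<in> E \<Longrightarrow> s \<notin> T \<Longrightarrow> e s = 0"
    and cC: "\<And>e. e \<in> E \<Longrightarrow> c e \<in> C" and s0: "(\<Sum>e\<in>E. c e * mnm T e) = 0" and e: "e \<in> E"
  have "(\<Sum>e\<in>E. c e * mnm S e) = (\<Sum>e\<in>E. c e * mnm T e)"
  proof (rule sum.cong[OF refl])
    fix e assume "e \<in> E"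
    then have "mnm S e = mnm T e" using mon_sub[OF assms(1,2)] sp by blast
    then show "c e * mnm S e = c e * mnm T e" by simp
  qed
  show "c e = 0"
  proof (rule indepCD[OF assms(3) E _ cC _ e])
    show "e s = 0" if "e \<in> E" "s \<notin> S" for e s using sp[OF that(1)] that(2) assms(2) by blast
    show "(\<Sum>e\<in>E. c e * mnm S e) = 0" using s0 \<open>(\<Sum>e\<in>E. c e * mnm S e) = (\<Sum>e\<in>E. c e * mnm T e)\<close> by simp
  qed
qed

lemma alg_indep_iff: assumes "finite T" shows "alg_indep F T \<longleftrightarrow> indepC F T"
proof
  assume A: "alg_indep F T"
  show "indepC F T"
  proof (rule indepCI)
    fix E c e assume h: "finite E" "\<And>e s. e \<in> E \<Longrightarrow> s \<notin> T \<Longrightarrow> e s = 0" "\<And>e. e \<in> E \<Longrightarrow> c e \<in> F"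
      "(\<Sum>e\<in>E. c e * mnm T e) = 0" "e \<in> E"
    have "finite T \<and> T \<subseteq> T \<and> finite E \<and> (\<forall>e\<in>E. \<forall>s. s \<notin> T \<longrightarrow> e s = 0) \<and>
      (\<forall>e\<in>E. c e \<in> F) \<and> (\<Sum>e\<in>E. c e * (\<Prod>s\<in>T. s ^ e s)) = 0"
      using h assms unfolding mnm_def by blast
    from A[unfolded alg_indep_def, rule_format, OF this h(5)] show "c e = 0" .
  qed
next
  assume i: "indepC F T"
  show "alg_indep F T" unfolding alg_indep_def
  proof (intro allI impI ballI)
    fix T' E c e
    assume h: "finite T' \<and> T' \<subseteq> T \<and> finite E \<and> (\<forall>e\<in>E. \<forall>s. s \<notin> T' \<longrightarrow> e s = 0) \<and>
      (\<forall>e\<in>E. c e \<in> F) \<and> (\<Sum>e\<in>E. c e * (\<Prod>s\<in>T'. s ^ e s)) = 0" and e: "e \<in> E"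
    have i': "indepC F T'" using indep_mono_set[OF assms _ i] h by blast
    show "c e = 0"
    proof (rule indepCD[OF i' _ _ _ _ e])
      show "finite E" using h by blast
      show "e s = 0" if "e \<in> E" "s \<notin> T'" for e s using h that by blast
      show "c e \<in> F" if "e \<in> E" for e using h that by blast
      show "(\<Sum>e\<in>E. c e * mnm T' e) = 0" using h unfolding mnm_def by blast
    qed
  qed
qed

lemma mon_add: "mnm T (\<lambda>s. e1 s + e2 s) = mnm T e1 * mnm T e2"
  unfolding mnm_def by (simp add: power_add prod.distrib)

lemma mon_in_gen: assumes "1 \<in> C" shows "mnm T e \<in> gen_alg C T"
  unfolding mnm_def
  by (rule subr_prod[OF gen_alg_subr[OF assms]], rule subr_power[OF gen_alg_subr[OF assms]])
    (auto intro: gen_alg.base_G)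

lemma expr_in_gen:
  assumes "1 \<in> C" "\<And>i. i \<in> I \<Longrightarrow> c i \<in> C"
  shows "(\<Sum>i\<in>I. c i * mnm T (ex i)) \<in> gen_alg C T"
  by (rule subr_sum[OF gen_alg_subr[OF assms(1)]], rule subrD(4)[OF gen_alg_subr[OF assms(1)]])
    (use assms mon_in_gen in \<open>auto intro: gen_alg.base_F\<close>)

lemma rep_gen:
  assumes C: "subr C" and T: "finite T" and x: "x \<in> gen_alg C T"
  shows "\<exists>E c. finite E \<and> (\<forall>e\<in>E. \<forall>s. s \<notin> T \<longrightarrow> e s = 0) \<and> (\<forall>e\<in>E. c e \<in> C) \<and>
           x = (\<Sum>e\<in>E. c e * mnm T e)"
  using x
proof induction
  case (base_F c)
  have "mnm T (\<lambda>_. 0) = 1" unfolding mnm_def by simp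
  then show ?case by (intro exI[of _ "{\<lambda>_. 0}"] exI[of _ "\<lambda>_. c"]) (use base_F in auto)
next
  case (base_G g)
  define e where "e = (\<lambda>s. if s = g then 1 else (0::nat))"
  have "mnm T e = (\<Prod>s\<in>T. if s = g then s else 1)" unfolding mnm_def e_def by (rule prod.cong) auto
  also have "\<dots> = g" using base_G T by simp
  finally show ?case using subrD(2)[OF C]
    by (intro exI[of _ "{e}"] exI[of _ "\<lambda>_. 1"]) (auto simp: e_def base_G)
next
  case (add x y)
  obtain E1 c1 where h1: "finite E1" "\<forall>e\<in>E1. \<forall>s. s \<notin> T \<longrightarrow> e s = 0" "\<forall>e\<in>E1. c1 e \<in> C" "x = (\<Sum>e\<in>E1. c1 e * mnm T e)"
    using add.IH(1) by blast
  obtain E2 c2 where h2: "finite E2" "\<forall>e\<in>E2. \<forall>s. s \<notin> T \<longrightarrow> e s = 0" "\<forall>e\<in>E2. c2 e \<in> C" "y = (\<Sum>e\<in>E2. c2 e * mnm T e)"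
    using add.IH(2) by blast
  define c where "c e = (if e \<in> E1 then c1 e else 0) + (if e \<in> E2 then c2 e else 0)" for e
  have eqe: "c e * mnm T e = (if e \<in> E1 then c1 e * mnm T e else 0) + (if e \<in> E2 then c2 e * mnm T e else 0)" for e
    unfolding c_def by (simp add: distrib_right)
  have "(\<Sum>e\<in>E1 \<union> E2. c e * mnm T e) = (\<Sum>e\<in>E1 \<union> E2. (if e \<in> E1 then c1 e * mnm T e else 0)) + (\<Sum>e\<in>E1 \<union> E2. (if e \<in> E2 then c2 e * mnm T e else 0))"
    unfolding eqe by (rule sum.distrib)
  also have "\<dots> = x + y"
    using sum.inter_restrict[of "E1 \<union> E2" "\<lambda>e. c1 e * mnm T e" E1] sum.inter_restrict[of "E1 \<union> E2" "\<lambda>e. c2 e * mnm T e" E2] h1 h2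
    by (simp add: Int_absorb1)
  finally have "x + y = (\<Sum>e\<in>E1 \<union> E2. c e * mnm T e)" by simp
  moreover have "\<forall>e\<in>E1 \<union> E2. c e \<in> C" unfolding c_def using h1 h2 subrD[OF C] by auto
  ultimately show ?case using h1 h2 by (intro exI[of _ "E1 \<union> E2"] exI[of _ c]) auto
next
  case (neg x)
  then obtain E1 c1 where h1: "finite E1" "\<forall>e\<in>E1. \<forall>s. s \<notin> T \<longrightarrow> e s = 0" "\<forall>e\<in>E1. c1 e \<in> C" "x = (\<Sum>e\<in>E1. c1 e * mnm T e)"
    by blast
  then show ?case using subrD(5)[OF C]
    by (intro exI[of _ E1] exI[of _ "\<lambda>e. - c1 e"]) (auto simp: sum_negf)
next
  case (mult x y)
  obtain E1 c1 where h1: "finite E1" "\<forall>e\<in>E1. \<forall>s. s \<notin> T \<longrightarrow> e s = 0" "\<forall>e\<in>E1. c1 e \<in> C" "x = (\<Sum>e\<in>E1. c1 e * mnm T e)"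
    using mult.IH(1) by blast
  obtain E2 c2 where h2: "finite E2" "\<forall>e\<in>E2. \<forall>s. s \<notin> T \<longrightarrow> e s = 0" "\<forall>e\<in>E2. c2 e \<in> C" "y = (\<Sum>e\<in>E2. c2 e * mnm T e)"
    using mult.IH(2) by blast
  define ad where "ad p = (\<lambda>s. fst p s + snd p s)" for p :: "('a \<Rightarrow> nat) \<times> ('a \<Rightarrow> nat)"
  define P where "P = E1 \<times> E2"
  have fP: "finite P" unfolding P_def using h1 h2 by simp
  define c where "c e = (\<Sum>p\<in>{p\<in>P. ad p = e}. c1 (fst p) * c2 (snd p))" for e
  have "x * y = (\<Sum>a\<in>E1. \<Sum>b\<in>E2. c1 a * c2 b * mnm T (\<lambda>s. a s + b s))"
    unfolding h1(4) h2(4) sum_product mon_add by (simp only: mult_ac)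
  also have "\<dots> = (\<Sum>p\<in>P. c1 (fst p) * c2 (snd p) * mnm T (ad p))"
    unfolding P_def sum.cartesian_product ad_def by (simp only: case_prod_beta')
  also have "\<dots> = (\<Sum>e\<in>ad ` P. \<Sum>p\<in>{p\<in>P. ad p = e}. c1 (fst p) * c2 (snd p) * mnm T (ad p))"
    by (rule sum.image_gen[OF fP])
  also have "\<dots> = (\<Sum>e\<in>ad ` P. c e * mnm T e)"
    unfolding c_def sum_distrib_right by (rule sum.cong) auto
  finally have "x * y = (\<Sum>e\<in>ad ` P. c e * mnm T e)" .
  moreover have "\<forall>e\<in>ad ` P. \<forall>s. s \<notin> T \<longrightarrow> e s = 0" unfolding P_def ad_def using h1 h2 by auto
  moreover have "\<forall>e\<in>ad ` P. c e \<in> C" unfolding c_def P_def using h1 h2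
    by (auto intro!: subr_sum[OF C] subrD(4)[OF C])
  ultimately show ?case using fP by (intro exI[of _ "ad ` P"] exI[of _ c]) auto
qed


lemma split_indep:
  assumes fin: "finite S" "finite Z" and disj: "S \<inter> Z = {}"
    and iS: "indepC C S" and iZ: "indepC D Z" and C1: "1 \<in> C" and gD: "gen_alg C S \<subseteq> D"
  shows "indepC C (S \<union> Z)"
proof (rule indepCI)
  fix E c e0
  assume E: "finite E" and sp: "\<And>e s. e \<in> E \<Longrightarrow> s \<notin> S \<union> Z \<Longrightarrow> e s = 0"
    and cC: "\<And>e. e \<in> E \<Longrightarrow> c e \<in> C" and s0: "(\<Sum>e\<in>E. c e * mnm (S \<union> Z) e) = 0" and e0: "e0 \<in> E"
  define rz where "rz e = (\<lambda>s. if s \<in> Z then e s else 0)" for e :: "'a \<Rightarrow> nat"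
  define rs where "rs e = (\<lambda>s. if s \<in> S then e s else 0)" for e :: "'a \<Rightarrow> nat"
  have msplit: "mnm (S \<union> Z) e = mnm S (rs e) * mnm Z (rz e)" for e
  proof -
    have "mnm (S \<union> Z) e = mnm S e * mnm Z e" unfolding mnm_def by (rule prod.union_disjoint[OF fin disj])
    moreover have "mnm S e = mnm S (rs e)" unfolding mnm_def rs_def by (rule prod.cong) auto
    moreover have "mnm Z e = mnm Z (rz e)" unfolding mnm_def rz_def by (rule prod.cong) auto
    ultimately show ?thesis by simp
  qed
  define Ef where "Ef f = {e \<in> E. rz e = f}" for f
  define g where "g f = (\<Sum>e\<in>Ef f. c e * mnm S (rs e))" for f
  have "0 = (\<Sum>e\<in>E. c e * mnm S (rs e) * mnm Z (rz e))" using s0 msplit by (simp add: mult.assoc)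
  also have "\<dots> = (\<Sum>f\<in>rz ` E. \<Sum>e\<in>Ef f. c e * mnm S (rs e) * mnm Z (rz e))"
    unfolding Ef_def by (rule sum.image_gen[OF E])
  also have "\<dots> = (\<Sum>f\<in>rz ` E. g f * mnm Z f)"
    unfolding g_def sum_distrib_right Ef_def by (rule sum.cong) auto
  finally have s1: "(\<Sum>f\<in>rz ` E. g f * mnm Z f) = 0" by simp
  have gD': "g f \<in> D" for f unfolding g_def using gD expr_in_gen[OF C1, of "Ef f" c S rs] cC
    unfolding Ef_def by blast
  have gz: "g f = 0" if "f \<in> rz ` E" for f
  proof (rule indepCD[OF iZ _ _ _ s1 that])
    show "finite (rz ` E)" using E by simp
    show "f' s = 0" if "f' \<in> rz ` E" "s \<notin> Z" for f' s using that unfolding rz_def by auto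
    show "g f' \<in> D" for f' by (rule gD')
  qed
  define f0 where "f0 = rz e0"
  have "g f0 = 0" using gz e0 unfolding f0_def by blast
  then have s2: "(\<Sum>e\<in>Ef f0. c e * mnm S (rs e)) = 0" unfolding g_def .
  show "c e0 = 0"
  proof (rule indep_idx[OF iS _ _ _ _ s2])
    show "finite (Ef f0)" unfolding Ef_def using E by simp
    show "e0 \<in> Ef f0" unfolding Ef_def f0_def using e0 by simp
    show "c e \<in> C" if "e \<in> Ef f0" for e using that cC unfolding Ef_def by blast
    show "rs e s = 0" if "e \<in> Ef f0" "s \<notin> S" for e s using that unfolding rs_def by simp
    show "inj_on rs (Ef f0)"
    proof (rule inj_onI)
      fix e1 e2 assume h: "e1 \<in> Ef f0" "e2 \<in> Ef f0" "rs e1 = rs e2"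
      show "e1 = e2"
      proof
        fix s
        show "e1 s = e2 s"
        proof (cases "s \<in> S")
          case True then show ?thesis using fun_cong[OF h(3), of s] unfolding rs_def by simp
        next
          case False
          show ?thesis
          proof (cases "s \<in> Z")
            case True
            have "rz e1 = rz e2" using h(1,2) unfolding Ef_def by simp
            then show ?thesis using fun_cong[of "rz e1" "rz e2" s] True unfolding rz_def by simp
          next
            case False2: False
            have "e1 s = 0" using sp[of e1 s] h(1) False False2 unfolding Ef_def by blast
            moreover have "e2 s = 0" using sp[of e2 s] h(2) False False2 unfolding Ef_def by blast
            ultimately show ?thesis by simp
          qed
        qed
      qed
    qed
  qed
qed

lemma singleton_indep:
  fixes x :: "'a::idom"
  assumes nalg: "\<not> alg D x" and D0: "0 \<in> D"
  shows "indepC D {x}"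
proof (rule indepCI)
  fix E c e0
  assume E: "finite E" and sp: "\<And>e s. e \<in> E \<Longrightarrow> s \<notin> {x} \<Longrightarrow> e s = 0"
    and cC: "\<And>e. e \<in> E \<Longrightarrow> c e \<in> D" and s0: "(\<Sum>e\<in>E. c e * mnm {x} e) = 0" and e0: "e0 \<in> E"
  have inj: "e1 = e2" if "e1 \<in> E" "e2 \<in> E" "e1 x = e2 x" for e1 e2
  proof
    fix s show "e1 s = e2 s"
    proof (cases "s = x")
      case True then show ?thesis using that by simp
    next
      case False
      then have "e1 s = 0" "e2 s = 0" using sp[of e1 s] sp[of e2 s] that by auto
      then show ?thesis by simp
    qed
  qed
  define p where "p = (\<Sum>e\<in>E. monom (c e) (e x))"
  have cp: "coeff p n = (\<Sum>e\<in>E. if e x = n then c e else 0)" for n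
    unfolding p_def coeff_sum coeff_monom by simp
  have cp2: "coeff p (e1 x) = c e1" if e1: "e1 \<in> E" for e1
  proof -
    have "coeff p (e1 x) = (\<Sum>e\<in>E. if e = e1 then c e else 0)"
      unfolding cp by (rule sum.cong[OF refl]) (use inj e1 in auto)
    also have "\<dots> = c e1" using E e1 by simp
    finally show ?thesis .
  qed
  have "pc D p" unfolding pc_def
  proof
    fix n show "coeff p n \<in> D"
    proof (cases "\<exists>e1\<in>E. e1 x = n")
      case True
      then obtain e1 where "e1 \<in> E" "e1 x = n" by blast
      then show ?thesis using cp2 cC by metis
    next
      case False
      then have "coeff p n = 0" unfolding cp by (intro sum.neutral) auto
      then show ?thesis using D0 by simp
    qed
  qed
  moreover have "poly p x = 0"
  proof -
    have "poly p x = (\<Sum>e\<in>E. c e * x ^ (e x))" unfolding p_def poly_sum poly_monom ..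
    also have "\<dots> = (\<Sum>e\<in>E. c e * mnm {x} e)" unfolding mnm_def by simp
    finally show ?thesis using s0 by simp
  qed
  ultimately have "p = 0" using nalg unfolding alg_def by blast
  then show "c e0 = 0" using cp2[OF e0] by simp
qed

lemma bridge_left:
  assumes C: "subr C" and T: "finite T" "x \<notin> T" and iT: "indepC C T"
    and na: "\<not> alg (gen_alg C T) x"
  shows "indepC C (insert x T)"
proof -
  have "indepC C (T \<union> {x})"
  proof (rule split_indep[OF T(1) _ _ iT _ subrD(2)[OF C]])
    show "indepC (gen_alg C T) {x}"
      by (rule singleton_indep[OF na subrD(1)[OF gen_alg_subr[OF subrD(2)[OF C]]]])
  qed (use T in auto)
  then show ?thesis by simp
qed

lemma bridge_right:
  assumes C: "subr C" and T: "finite T" "x \<notin> T" and iT: "indepC C (insert x T)"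
  shows "\<not> alg (gen_alg C T) x"
proof
  assume A: "alg (gen_alg C T) x"
  obtain p where p: "p \<noteq> 0" "pc (gen_alg C T) p" "poly p x = 0" using A unfolding alg_def by blast
  have "\<forall>j. \<exists>Ec. finite (fst Ec) \<and> (\<forall>e\<in>fst Ec. \<forall>s. s \<notin> T \<longrightarrow> e s = 0) \<and> (\<forall>e\<in>fst Ec. snd Ec e \<in> C) \<and>
           coeff p j = (\<Sum>e\<in>fst Ec. snd Ec e * mnm T e)"
  proof
    fix j
    have "coeff p j \<in> gen_alg C T" using p(2) unfolding pc_def by blast
    from rep_gen[OF C T(1) this] obtain E c where "finite E \<and> (\<forall>e\<in>E. \<forall>s. s \<notin> T \<longrightarrow> e s = 0) \<and> (\<forall>e\<in>E. c e \<in> C) \<and>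
           coeff p j = (\<Sum>e\<in>E. c e * mnm T e)"
      by blast
    then show "\<exists>Ec. finite (fst Ec) \<and> (\<forall>e\<in>fst Ec. \<forall>s. s \<notin> T \<longrightarrow> e s = 0) \<and> (\<forall>e\<in>fst Ec. snd Ec e \<in> C) \<and>
           coeff p j = (\<Sum>e\<in>fst Ec. snd Ec e * mnm T e)" by (intro exI[of _ "(E, c)"]) simp
  qed
  from choice[OF this] obtain R where R: "\<And>j. finite (fst (R j)) \<and> (\<forall>e\<in>fst (R j). \<forall>s. s \<notin> T \<longrightarrow> e s = 0) \<and>
      (\<forall>e\<in>fst (R j). snd (R j) e \<in> C) \<and> coeff p j = (\<Sum>e\<in>fst (R j). snd (R j) e * mnm T e)" by blast
  define EE where "EE j = fst (R j)" for j
  define cc where "cc j = snd (R j)" for j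
  have EEf: "finite (EE j)" for j using R unfolding EE_def by blast
  have EEs: "e \<in> EE j \<Longrightarrow> s \<notin> T \<Longrightarrow> e s = 0" for e j s using R unfolding EE_def by blast
  have ccC: "e \<in> EE j \<Longrightarrow> cc j e \<in> C" for e j using R unfolding EE_def cc_def by blast
  have cpj: "coeff p j = (\<Sum>e\<in>EE j. cc j e * mnm T e)" for j using R unfolding EE_def cc_def by blast
  define I where "I = Sigma {..degree p} EE"
  define ex where "ex q = (snd q)(x := fst q)" for q :: "nat \<times> ('a \<Rightarrow> nat)"
  have fI: "finite I" unfolding I_def using EEf by auto
  have mx: "mnm (insert x T) (e(x := j)) = x ^ j * mnm T e" if "e \<in> EE j'" for e j j'
  proof -
    have "mnm (insert x T) (e(x := j)) = x ^ j * (\<Prod>s\<in>T. s ^ (e(x := j)) s)"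
      unfolding mnm_def using T by (simp add: prod.insert)
    also have "(\<Prod>s\<in>T. s ^ (e(x := j)) s) = mnm T e" unfolding mnm_def
      by (rule prod.cong) (use T in auto)
    finally show ?thesis .
  qed
  have "(\<Sum>q\<in>I. cc (fst q) (snd q) * mnm (insert x T) (ex q)) = (\<Sum>j\<le>degree p. \<Sum>e\<in>EE j. cc j e * mnm (insert x T) (e(x := j)))"
    unfolding I_def ex_def by (subst sum.Sigma) (use EEf in \<open>auto simp: case_prod_beta'\<close>)
  also have "\<dots> = (\<Sum>j\<le>degree p. coeff p j * x ^ j)"
  proof (rule sum.cong[OF refl])
    fix j
    have "(\<Sum>e\<in>EE j. cc j e * mnm (insert x T) (e(x := j))) = (\<Sum>e\<in>EE j. cc j e * mnm T e * x ^ j)"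
      by (rule sum.cong[OF refl]) (simp add: mx mult_ac)
    then show "(\<Sum>e\<in>EE j. cc j e * mnm (insert x T) (e(x := j))) = coeff p j * x ^ j"
      unfolding cpj sum_distrib_right by simp
  qed
  also have "\<dots> = 0" using p(3) unfolding poly_altdef by simp
  finally have s0: "(\<Sum>q\<in>I. cc (fst q) (snd q) * mnm (insert x T) (ex q)) = 0" .
  have inj: "inj_on ex I"
  proof (rule inj_onI)
    fix q1 q2 assume h: "q1 \<in> I" "q2 \<in> I" "ex q1 = ex q2"
    obtain j1 e1 where q1: "q1 = (j1, e1)" "e1 \<in> EE j1" using h(1) unfolding I_def by auto
    obtain j2 e2 where q2: "q2 = (j2, e2)" "e2 \<in> EE j2" using h(2) unfolding I_def by auto
    have j: "j1 = j2" using fun_cong[OF h(3), of x] unfolding ex_def q1 q2 by simp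
    have "e1 = e2"
    proof
      fix s show "e1 s = e2 s"
      proof (cases "s = x")
        case True then show ?thesis using EEs[OF q1(2) T(2)] EEs[OF q2(2) T(2)] by simp
      next
        case False then show ?thesis using fun_cong[OF h(3), of s] unfolding ex_def q1 q2 by simp
      qed
    qed
    then show "q1 = q2" using j q1 q2 by simp
  qed
  have zero: "cc j e = 0" if "j \<le> degree p" "e \<in> EE j" for j e
  proof -
    have "cc (fst (j, e)) (snd (j, e)) = 0"
    proof (rule indep_idx[OF iT fI inj _ _ s0])
      show "(j, e) \<in> I" unfolding I_def using that by simp
      show "ex q s = 0" if h: "q \<in> I" "s \<notin> insert x T" for q s
      proof -
        obtain j' e' where q: "q = (j', e')" "e' \<in> EE j'" using h(1) unfolding I_def by auto
        have "e' s = 0" by (rule EEs[OF q(2)]) (use h(2) in simp)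
        then show ?thesis using h(2) unfolding q(1) ex_def by simp
      qed
      show "cc (fst q) (snd q) \<in> C" if "q \<in> I" for q using that ccC unfolding I_def by auto
    qed
    then show ?thesis by simp
  qed
  have "coeff p (degree p) = 0" unfolding cpj using zero by simp
  then show False using p(1) by simp
qed

definition Cl :: "'a::idom set \<Rightarrow> 'a set \<Rightarrow> 'a set" where
  "Cl F T = {x. alg (gen_alg F T) x}"

lemma subr_Cl: "subr F \<Longrightarrow> subr (Cl F T)"
  unfolding Cl_def by (rule subr_alg[OF gen_alg_subr[OF subrD(2)]])

lemma gen_sub_Cl: assumes "subr F" shows "gen_alg F T \<subseteq> Cl F T"
  unfolding Cl_def using alg_base[OF gen_alg_subr[OF subrD(2)[OF assms]]] by blast

lemma Cl_trans:
  assumes F: "subr F" and W: "W \<subseteq> Cl F U" shows "Cl F W \<subseteq> Cl F U"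
proof
  fix x assume "x \<in> Cl F W"
  then have x: "alg (gen_alg F W) x" unfolding Cl_def by simp
  have "gen_alg F W \<subseteq> Cl F U"
    by (rule gen_alg_sub[OF subr_Cl[OF F]]) (use gen_sub_Cl[OF F, of U] gen_alg_base_sub W in blast)+
  then have "alg {y. alg (gen_alg F U) y} x" using alg_mono[OF _ x] unfolding Cl_def by blast
  then show "x \<in> Cl F U" unfolding Cl_def using trans_full[OF gen_alg_subr[OF subrD(2)[OF F]]] by blast
qed

lemma Cl_mono: "T \<subseteq> T' \<Longrightarrow> Cl F T \<subseteq> Cl F T'"
  unfolding Cl_def using alg_mono[OF gen_alg_mono[OF order_refl]] by blast

lemma steinitz:
  assumes F: "subr F" and W: "finite W" "indepC F W"
  shows "finite U \<Longrightarrow> indepC F U \<Longrightarrow> U \<subseteq> Cl F W \<Longrightarrow> card U \<le> card W"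
proof (induction "card (U - W)" arbitrary: U rule: less_induct)
  case less
  show ?case
  proof (cases "U \<subseteq> W")
    case True then show ?thesis using card_mono[OF W(1)] by blast
  next
    case False
    then obtain u where u: "u \<in> U" "u \<notin> W" by blast
    define U' where "U' = U - {u}"
    have fU': "finite U'" using less(2) unfolding U'_def by simp
    have iU': "indepC F U'" using indep_mono_set[OF less(2) _ less(3)] unfolding U'_def by blast
    have UU': "U = insert u U'" "u \<notin> U'" using u unfolding U'_def by auto
    have "\<exists>w\<in>W - U. indepC F (insert w U')"
    proof (rule ccontr)
      assume "\<not> (\<exists>w\<in>W - U. indepC F (insert w U'))"
      then have nw: "\<And>w. w \<in> W - U \<Longrightarrow> \<not> indepC F (insert w U')" by blast
      have "W \<subseteq> Cl F U'"
      proof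
        fix w assume w: "w \<in> W"
        show "w \<in> Cl F U'"
        proof (cases "w \<in> U")
          case True
          then have "w \<in> U'" using u w unfolding U'_def by auto
          then show ?thesis using gen_sub_Cl[OF F, of U'] gen_alg.base_G[of w U' F] by blast
        next
          case False
          then have "w \<notin> U'" unfolding U'_def by auto
          then show ?thesis using bridge_left[OF F fU' _ iU'] nw[of w] w False unfolding Cl_def by blast
        qed
      qed
      then have "Cl F W \<subseteq> Cl F U'" by (rule Cl_trans[OF F])
      then have "u \<in> Cl F U'" using less(4) u by blast
      moreover have "\<not> alg (gen_alg F U') u"
        by (rule bridge_right[OF F fU' UU'(2)]) (use less(3) UU'(1) in simp)
      ultimately show False unfolding Cl_def by simp
    qed
    then obtain w where w: "w \<in> W" "w \<notin> U" "indepC F (insert w U')" by blast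
    define U'' where "U'' = insert w U'"
    have wU': "w \<notin> U'" using w unfolding U'_def by auto
    have cU: "card U'' = card U" unfolding U''_def UU'(1) using fU' wU' UU'(2) by simp
    have lt: "card (U'' - W) < card (U - W)"
    proof -
      have "U'' - W = (U - W) - {u}" unfolding U''_def U'_def using w by auto
      then show ?thesis using card_Diff1_less[of "U - W" u] u less(2) by simp
    qed
    have "card U'' \<le> card W"
    proof (rule less(1)[OF lt])
      show "finite U''" unfolding U''_def using fU' by simp
      show "indepC F U''" unfolding U''_def by (rule w(3))
      show "U'' \<subseteq> Cl F W" unfolding U''_def using less(4) w(1) gen_sub_Cl[OF F, of W]
          gen_alg.base_G[of w W F] unfolding U'_def by blast
    qed
    then show ?thesis using cU by simp
  qed
qed


locale agd =
  fixes Ak :: "nat \<Rightarrow> 'a::idom set"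
  assumes agd: "affine_graded_domain Ak"
begin

abbreviation "F \<equiv> Ak 0"
abbreviation "hc \<equiv> hcomp Ak"
abbreviation "ini \<equiv> initial Ak"

lemmas AG = agd[unfolded affine_graded_domain_def]
lemmas AG1 = conjunct1[OF AG]
lemmas AG2 = conjunct1[OF conjunct2[OF AG]]
lemmas AG3 = conjunct1[OF conjunct2[OF conjunct2[OF AG]]]
lemmas AG4 = conjunct1[OF conjunct2[OF conjunct2[OF conjunct2[OF AG]]]]
lemmas AG5 = conjunct2[OF conjunct2[OF conjunct2[OF conjunct2[OF AG]]]]

lemma F_subfield: "is_subfield F" by (rule AG1)
lemma Ak_zero: "0 \<in> Ak k" using AG2 by blast
lemma Ak_add: "x \<in> Ak k \<Longrightarrow> y \<in> Ak k \<Longrightarrow> x + y \<in> Ak k" using AG2 by blast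
lemma Ak_smul: "c \<in> F \<Longrightarrow> x \<in> Ak k \<Longrightarrow> c * x \<in> Ak k" using AG2 by blast
lemma Ak_mult: "x \<in> Ak i \<Longrightarrow> y \<in> Ak j \<Longrightarrow> x * y \<in> Ak (i + j)" using AG3 by blast
lemma decomp: "\<exists>!c :: nat \<Rightarrow> 'a. (\<forall>k. c k \<in> Ak k) \<and> finite {k. c k \<noteq> 0} \<and> a = (\<Sum>k\<in>{k. c k \<noteq> 0}. c k)"
  by (rule spec[OF AG4])
lemma fingen: "\<exists>G. finite G \<and> gen_alg F G = UNIV" by (rule AG5)

lemma subr_F: "subr F"
proof -
  have "0 \<in> F" "1 \<in> F" "\<forall>x\<in>F. \<forall>y\<in>F. x + y \<in> F \<and> x * y \<in> F \<and> - x \<in> F"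
    using F_subfield[unfolded is_subfield_def] by blast+
  then show ?thesis unfolding subr_def by blast
qed

lemma Ak_neg: "x \<in> Ak k \<Longrightarrow> - x \<in> Ak k"
  using Ak_smul[of "-1" x k] subrD[OF subr_F] by simp

lemma Ak_sum: "(\<And>i. i \<in> I \<Longrightarrow> f i \<in> Ak k) \<Longrightarrow> sum f I \<in> Ak k"
proof (induction I rule: infinite_finite_induct)
  case (infinite A) then show ?case using Ak_zero by simp
next
  case empty then show ?case using Ak_zero by simp
next
  case (insert x F) then show ?case using Ak_add by simp
qed

lemma hc_spec: "(\<forall>k. hc a k \<in> Ak k) \<and> finite {k. hc a k \<noteq> 0} \<and> a = (\<Sum>k\<in>{k. hc a k \<noteq> 0}. hc a k)"
  unfolding hcomp_def by (rule theI'[OF decomp])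

lemma hc_in: "hc a k \<in> Ak k" using hc_spec by blast

lemma hc_unique:
  assumes "\<forall>k. c k \<in> Ak k" "finite {k. c k \<noteq> 0}" "a = (\<Sum>k\<in>{k. c k \<noteq> 0}. c k)"
  shows "hc a = c"
  unfolding hcomp_def by (rule the1_equality[OF decomp]) (use assms in blast)

lemma hc_poly:
  assumes "\<And>k. coeff p k \<in> Ak k" "a = poly p 1"
  shows "hc a = coeff p"
proof (rule hc_unique)
  show "\<forall>k. coeff p k \<in> Ak k" using assms(1) by blast
  have sub: "{k. coeff p k \<noteq> 0} \<subseteq> {..degree p}" by (auto intro: le_degree)
  then show "finite {k. coeff p k \<noteq> 0}" using finite_subset by blast
  have "a = (\<Sum>k\<le>degree p. coeff p k)" unfolding assms(2) poly_altdef by simp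
  also have "\<dots> = (\<Sum>k\<in>{k. coeff p k \<noteq> 0}. coeff p k)"
    by (rule sum.mono_neutral_right) (use sub in auto)
  finally show "a = (\<Sum>k\<in>{k. coeff p k \<noteq> 0}. coeff p k)" .
qed

lemma hc_ex_poly: "\<exists>p. coeff p = hc a \<and> poly p 1 = a"
proof -
  have fin: "finite {k. hc a k \<noteq> 0}" using hc_spec by blast
  obtain K where K: "\<And>k. k \<in> {k. hc a k \<noteq> 0} \<Longrightarrow> k < K"
    using finite_nat_bounded[OF fin] by auto
  define p where "p = (\<Sum>k<K. monom (hc a k) k)"
  have cp: "coeff p n = hc a n" for n
  proof -
    have "coeff p n = (\<Sum>k<K. if k = n then hc a k else 0)"
      unfolding p_def coeff_sum coeff_monom by simp
    also have "\<dots> = (if n < K then hc a n else 0)" by simp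
    also have "\<dots> = hc a n" using K[of n] by auto
    finally show ?thesis .
  qed
  have "poly p 1 = (\<Sum>k<K. hc a k)" unfolding p_def poly_sum poly_monom by simp
  also have "\<dots> = (\<Sum>k\<in>{k. hc a k \<noteq> 0}. hc a k)"
    by (rule sum.mono_neutral_right) (use K in auto)
  also have "\<dots> = a" using hc_spec[of a] by (elim conjE) (rule sym)
  finally show ?thesis using cp by blast
qed

lemma pc_Ak_mult:
  assumes "\<And>k. coeff p k \<in> Ak k" "\<And>k. coeff q k \<in> Ak k"
  shows "coeff (p * q) n \<in> Ak n"
  unfolding coeff_mult
proof (rule Ak_sum)
  fix i assume "i \<in> {..n}"
  then have "i + (n - i) = n" by simp
  then show "coeff p i * coeff q (n - i) \<in> Ak n" using Ak_mult[OF assms(1)[of i] assms(2)[of "n - i"]] by simp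
qed

lemma hc_add: "hc (a + b) k = hc a k + hc b k"
proof -
  obtain p q where p: "coeff p = hc a" "poly p 1 = a" and q: "coeff q = hc b" "poly q 1 = b"
    using hc_ex_poly by metis
  have "hc (a + b) = coeff (p + q)"
    by (rule hc_poly) (use p q hc_in Ak_add in auto)
  then show ?thesis using p q by simp
qed

lemma hc_mult: "hc (a * b) n = (\<Sum>i\<le>n. hc a i * hc b (n - i))"
proof -
  obtain p q where p: "coeff p = hc a" "poly p 1 = a" and q: "coeff q = hc b" "poly q 1 = b"
    using hc_ex_poly by metis
  have "hc (a * b) = coeff (p * q)"
    by (rule hc_poly) (use p q hc_in pc_Ak_mult[of p q] in auto)
  then show ?thesis using p q by (simp add: coeff_mult)
qed

lemma hc_hom: assumes "x \<in> Ak j" shows "hc x k = (if k = j then x else 0)"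
proof -
  have "hc x = coeff (monom x j)"
    by (rule hc_poly) (use assms Ak_zero in \<open>auto simp: coeff_monom poly_monom\<close>)
  then show ?thesis by (simp add: coeff_monom)
qed

lemma hc_zero: "hc 0 k = 0"
  using hc_hom[OF Ak_zero[of 0]] by simp

lemma hc_sum: "hc (sum f I) k = (\<Sum>i\<in>I. hc (f i) k)"
proof (induction I rule: infinite_finite_induct)
  case (infinite A) then show ?case using hc_zero by simp
next
  case empty then show ?case using hc_zero by simp
next
  case (insert x F) then show ?case using hc_add by simp
qed

definition ordd :: "'a \<Rightarrow> nat" where "ordd a = (LEAST k. hc a k \<noteq> 0)"

lemma nz_ex: assumes "a \<noteq> 0" shows "\<exists>k. hc a k \<noteq> 0"
proof (rule ccontr)
  assume "\<not> (\<exists>k. hc a k \<noteq> 0)"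
  then have "{k. hc a k \<noteq> 0} = {}" by auto
  then show False using hc_spec[of a] assms by simp
qed

lemma ordd_nz: "a \<noteq> 0 \<Longrightarrow> hc a (ordd a) \<noteq> 0"
  unfolding ordd_def using nz_ex by (metis (mono_tags, lifting) LeastI)

lemma below_ordd: "k < ordd a \<Longrightarrow> hc a k = 0"
  unfolding ordd_def using not_less_Least by blast

lemma ordd_eq: "hc a d \<noteq> 0 \<Longrightarrow> (\<And>k. k < d \<Longrightarrow> hc a k = 0) \<Longrightarrow> ordd a = d"
  unfolding ordd_def by (rule Least_equality) (blast, metis not_less)

lemma ini_eq: "a \<noteq> 0 \<Longrightarrow> ini a = hc a (ordd a)"
  unfolding initial_def ordd_def by simp

lemma ini_zero[simp]: "ini 0 = 0" unfolding initial_def by simp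

lemma ini_nz: "a \<noteq> 0 \<Longrightarrow> ini a \<noteq> 0" using ini_eq ordd_nz by simp

lemma ini_in: "ini a \<in> Ak (ordd a)"
  by (cases "a = 0") (auto simp: ini_eq hc_in Ak_zero)

lemma ini_hom: assumes "x \<in> Ak j" "x \<noteq> 0" shows "ordd x = j" "ini x = x"
proof -
  show o: "ordd x = j" by (rule ordd_eq) (use hc_hom[OF assms(1)] assms(2) in auto)
  show "ini x = x" using ini_eq[OF assms(2)] o hc_hom[OF assms(1)] by simp
qed

lemma ini_F: "c \<in> F \<Longrightarrow> ini c = c"
  by (cases "c = 0") (auto simp: ini_hom)

lemma mult_lowest:
  assumes a: "a \<noteq> 0" and b: "b \<noteq> 0"
  shows "a * b \<noteq> 0" "ordd (a * b) = ordd a + ordd b" "ini (a * b) = ini a * ini b"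
proof -
  let ?oa = "ordd a" and ?ob = "ordd b"
  have low: "hc (a * b) k = 0" if "k < ?oa + ?ob" for k
    unfolding hc_mult
  proof (rule sum.neutral, rule ballI)
    fix i assume ik: "i \<in> {..k}"
    show "hc a i * hc b (k - i) = 0"
    proof (cases "i < ?oa")
      case True then show ?thesis using below_ordd by simp
    next
      case False then have "k - i < ?ob" using that ik by auto
      then show ?thesis using below_ordd by simp
    qed
  qed
  have top: "hc (a * b) (?oa + ?ob) = hc a ?oa * hc b ?ob"
  proof -
    have "hc (a * b) (?oa + ?ob) = hc a ?oa * hc b (?oa + ?ob - ?oa) + (\<Sum>i\<in>{..?oa + ?ob} - {?oa}. hc a i * hc b (?oa + ?ob - i))"
      unfolding hc_mult by (rule sum.remove) auto
    moreover have "(\<Sum>i\<in>{..?oa + ?ob} - {?oa}. hc a i * hc b (?oa + ?ob - i)) = 0"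
    proof (rule sum.neutral, rule ballI)
      fix i assume i: "i \<in> {..?oa + ?ob} - {?oa}"
      show "hc a i * hc b (?oa + ?ob - i) = 0"
      proof (cases "i < ?oa")
        case True then show ?thesis using below_ordd by simp
      next
        case False then have "?oa + ?ob - i < ?ob" using i by auto
        then show ?thesis using below_ordd by simp
      qed
    qed
    ultimately show ?thesis by simp
  qed
  have nz: "hc a ?oa * hc b ?ob \<noteq> 0" using ordd_nz[OF a] ordd_nz[OF b] by simp
  show ab: "a * b \<noteq> 0" using a b by simp
  show o: "ordd (a * b) = ?oa + ?ob" by (rule ordd_eq) (use top nz low in auto)
  show "ini (a * b) = ini a * ini b" using ini_eq[OF ab] o top ini_eq[OF a] ini_eq[OF b] by simp
qed

lemma prod_lowest:
  assumes "finite I" "\<And>i. i \<in> I \<Longrightarrow> f i \<noteq> 0"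
  shows "prod f I \<noteq> 0 \<and> ini (prod f I) = (\<Prod>i\<in>I. ini (f i))"
  using assms
proof (induction I rule: finite_induct)
  case empty
  have "(1::'a) \<in> F" using subrD(2)[OF subr_F] .
  then show ?case using ini_F by simp
next
  case (insert x I)
  then have "prod f I \<noteq> 0" "ini (prod f I) = (\<Prod>i\<in>I. ini (f i))" "f x \<noteq> 0" by auto
  then show ?case using insert(1,2) mult_lowest[of "f x" "prod f I"] by simp
qed

lemma power_lowest:
  assumes "a \<noteq> 0" shows "a ^ n \<noteq> 0 \<and> ini (a ^ n) = ini a ^ n"
  using prod_lowest[of "{..<n}" "\<lambda>_. a"] assms by simp

lemma lowest_sum:
  assumes E: "finite E" "E \<noteq> {}" and nz: "\<And>e. e \<in> E \<Longrightarrow> t e \<noteq> 0"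
  defines "d0 \<equiv> Min (ordd ` t ` E)"
  shows "hc (\<Sum>e\<in>E. t e) d0 = (\<Sum>e\<in>{e\<in>E. ordd (t e) = d0}. ini (t e))"
proof -
  have le: "d0 \<le> ordd (t e)" if "e \<in> E" for e unfolding d0_def using E that by auto
  have "hc (\<Sum>e\<in>E. t e) d0 = (\<Sum>e\<in>E. hc (t e) d0)" by (rule hc_sum)
  also have "\<dots> = (\<Sum>e\<in>E. if ordd (t e) = d0 then ini (t e) else 0)"
  proof (rule sum.cong[OF refl])
    fix e assume e: "e \<in> E"
    show "hc (t e) d0 = (if ordd (t e) = d0 then ini (t e) else 0)"
    proof (cases "ordd (t e) = d0")
      case True then show ?thesis using ini_eq[OF nz[OF e]] by simp
    next
      case False then have "d0 < ordd (t e)" using le[OF e] by simp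
      then show ?thesis using below_ordd False by simp
    qed
  qed
  also have "\<dots> = (\<Sum>e\<in>{e\<in>E. ordd (t e) = d0}. ini (t e))"
    by (rule sum.inter_filter[OF E(1), symmetric])
  finally show ?thesis .
qed

lemma lowest_ex:
  assumes E: "finite E" "E \<noteq> {}"
  shows "{e\<in>E. ordd (t e) = Min (ordd ` t ` E)} \<noteq> {}"
proof -
  have "Min (ordd ` t ` E) \<in> ordd ` t ` E" using E by (intro Min_in) auto
  then show ?thesis by auto
qed

end


definition indepF :: "'a::idom set \<Rightarrow> 'b set \<Rightarrow> ('b \<Rightarrow> 'a) \<Rightarrow> bool" where
  "indepF C I v \<longleftrightarrow> (\<forall>E c. finite E \<and> (\<forall>e\<in>E. \<forall>i. i \<notin> I \<longrightarrow> e i = 0) \<and> (\<forall>e\<in>E. c e \<in> C) \<and>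
      (\<Sum>e\<in>E. c e * (\<Prod>i\<in>I. v i ^ e i)) = 0 \<longrightarrow> (\<forall>e\<in>E. c e = 0))"

lemma indepFD:
  assumes "indepF C I v" "finite E" "\<And>e i. e \<in> E \<Longrightarrow> i \<notin> I \<Longrightarrow> e i = 0" "\<And>e. e \<in> E \<Longrightarrow> c e \<in> C"
    "(\<Sum>e\<in>E. c e * (\<Prod>i\<in>I. v i ^ e i)) = 0" "e \<in> E"
  shows "c e = 0"
proof -
  have h: "finite E \<and> (\<forall>e\<in>E. \<forall>i. i \<notin> I \<longrightarrow> e i = 0) \<and> (\<forall>e\<in>E. c e \<in> C) \<and> (\<Sum>e\<in>E. c e * (\<Prod>i\<in>I. v i ^ e i)) = 0"
    using assms(2-5) by blast
  have "\<forall>e\<in>E. c e = 0" using assms(1) h unfolding indepF_def by (elim allE[of _ E] allE[of _ c]) (erule mp)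
  then show ?thesis using assms(6) by simp
qed

lemma indepFI:
  assumes "\<And>E c e. finite E \<Longrightarrow> (\<And>e i. e \<in> E \<Longrightarrow> i \<notin> I \<Longrightarrow> e i = 0) \<Longrightarrow> (\<And>e. e \<in> E \<Longrightarrow> c e \<in> C) \<Longrightarrow>
    (\<Sum>e\<in>E. c e * (\<Prod>i\<in>I. v i ^ e i)) = 0 \<Longrightarrow> e \<in> E \<Longrightarrow> c e = 0"
  shows "indepF C I v"
  unfolding indepF_def
proof (intro allI impI ballI)
  fix E c e assume h: "finite E \<and> (\<forall>e\<in>E. \<forall>i. i \<notin> I \<longrightarrow> e i = 0) \<and> (\<forall>e\<in>E. c e \<in> C) \<and> (\<Sum>e\<in>E. c e * (\<Prod>i\<in>I. v i ^ e i)) = 0"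
    and e: "e \<in> E"
  show "c e = 0" by (rule assms) (use h e in auto)
qed

lemma indepF_id: "indepF C T (\<lambda>x. x) \<longleftrightarrow> indepC C T"
  unfolding indepF_def indepC_def mnm_def by simp

lemma indepF_cong: assumes "\<And>i. i \<in> I \<Longrightarrow> v i = w i" shows "indepF C I v \<longleftrightarrow> indepF C I w"
proof -
  have "(\<Prod>i\<in>I. v i ^ e i) = (\<Prod>i\<in>I. w i ^ e i)" for e by (rule prod.cong) (use assms in auto)
  then show ?thesis unfolding indepF_def by simp
qed

lemma indepF_image:
  fixes v :: "'i \<Rightarrow> 'a::idom"
  assumes I: "finite I" "inj_on v I" and ind: "indepF C I v"
  shows "indepC C (v ` I)"
proof (rule indepCI)
  fix E c e0
  assume E: "finite E" and sp: "\<And>e s. e \<in> E \<Longrightarrow> s \<notin> v ` I \<Longrightarrow> e s = 0"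
    and cC: "\<And>e. e \<in> E \<Longrightarrow> c e \<in> C" and s0: "(\<Sum>e\<in>E. c e * mnm (v ` I) e) = 0" and e0: "e0 \<in> E"
  define r where "r e = (\<lambda>i. if i \<in> I then e (v i) else 0)" for e :: "'a \<Rightarrow> nat"
  have injr: "inj_on r E"
  proof (rule inj_onI)
    fix e1 e2 assume h: "e1 \<in> E" "e2 \<in> E" "r e1 = r e2"
    show "e1 = e2"
    proof
      fix s show "e1 s = e2 s"
      proof (cases "s \<in> v ` I")
        case True
        then obtain i where i: "i \<in> I" "s = v i" by blast
        then show ?thesis using fun_cong[OF h(3), of i] unfolding r_def by simp
      next
        case False
        then show ?thesis using sp[OF h(1) False] sp[OF h(2) False] by simp
      qed
    qed
  qed
  have mr: "mnm (v ` I) e = (\<Prod>i\<in>I. v i ^ r e i)" for e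
  proof -
    have "mnm (v ` I) e = (\<Prod>i\<in>I. v i ^ e (v i))" unfolding mnm_def
      using prod.reindex[OF I(2), of "\<lambda>s. s ^ e s"] by simp
    also have "\<dots> = (\<Prod>i\<in>I. v i ^ r e i)" unfolding r_def by (rule prod.cong) auto
    finally show ?thesis .
  qed
  define c' where "c' e = c (the_inv_into E r e)" for e
  have c'r: "c' (r e) = c e" if "e \<in> E" for e unfolding c'_def using the_inv_into_f_f[OF injr that] by simp
  have "(\<Sum>e'\<in>r ` E. c' e' * (\<Prod>i\<in>I. v i ^ e' i)) = (\<Sum>e\<in>E. c' (r e) * (\<Prod>i\<in>I. v i ^ r e i))"
    by (rule sum.reindex[OF injr, unfolded comp_def])
  also have "\<dots> = (\<Sum>e\<in>E. c e * mnm (v ` I) e)" by (rule sum.cong[OF refl]) (simp add: c'r mr)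
  also have "\<dots> = 0" by (rule s0)
  finally have s1: "(\<Sum>e'\<in>r ` E. c' e' * (\<Prod>i\<in>I. v i ^ e' i)) = 0" .
  have "c' (r e0) = 0"
  proof (rule indepFD[OF ind _ _ _ s1])
    show "finite (r ` E)" using E by simp
    show "r e0 \<in> r ` E" using e0 by simp
    show "e' i = 0" if "e' \<in> r ` E" "i \<notin> I" for e' i using that unfolding r_def by auto
    show "c' e' \<in> C" if h: "e' \<in> r ` E" for e'
    proof -
      obtain e where e: "e \<in> E" "e' = r e" using h by blast
      show ?thesis unfolding e(2) c'r[OF e(1)] by (rule cC[OF e(1)])
    qed
  qed
  then show "c e0 = 0" using c'r[OF e0] by simp
qed

lemma indep_empty: "indepC C {}"
proof (rule indepCI)
  fix E c e0
  assume E: "finite E" and sp: "\<And>e s. e \<in> E \<Longrightarrow> s \<notin> {} \<Longrightarrow> e s = 0"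
    and s0: "(\<Sum>e\<in>E. c e * mnm {} e) = 0" and e0: "e0 \<in> E"
  have z: "e = (\<lambda>_. 0)" if "e \<in> E" for e using sp[OF that] by auto
  have "E = {e0}" using z e0 by blast
  then show "c e0 = 0" using s0 unfolding mnm_def by simp
qed

lemma indep_no_zero:
  assumes T: "finite T" and i: "indepC C T" and C1: "(1::'a::idom) \<in> C"
  shows "(0::'a) \<notin> T"
proof
  assume z: "0 \<in> T"
  define d where "d = (\<lambda>s::'a. if s = 0 then 1 else (0::nat))"
  have "mnm T d = 0 ^ d 0 * (\<Prod>s\<in>T - {0}. s ^ d s)" unfolding mnm_def by (rule prod.remove[OF T z])
  then have m0: "mnm T d = 0" unfolding d_def by simp
  have "(\<lambda>_. 1::'a) d = 0"
  proof (rule indepCD[OF i, of "{d}"])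
    show "e s = 0" if "e \<in> {d}" "s \<notin> T" for e s using that z unfolding d_def by auto
  qed (use C1 m0 in auto)
  then show False by simp
qed

lemma maxext:
  fixes F :: "'a::idom set"
  assumes F: "subr F" and X: "finite X" and Y: "finite Y" "indepC F Y"
  shows "\<exists>Z\<subseteq>X. Y \<inter> Z = {} \<and> indepC F (Y \<union> Z) \<and> X \<subseteq> Cl F (Y \<union> Z)"
proof -
  define M where "M = {Z. Z \<subseteq> X \<and> Y \<inter> Z = {} \<and> indepC F (Y \<union> Z)}"
  have MP: "M \<subseteq> Pow X" unfolding M_def by blast
  have fM: "finite M" using finite_subset[OF MP] X by blast
  have eM: "{} \<in> M" unfolding M_def using Y by simp
  have ne: "card ` M \<noteq> {}" using eM by blast
  have "Max (card ` M) \<in> card ` M" using fM ne by (intro Max_in) simp_all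
  then obtain Z where Z: "Z \<in> M" "card Z = Max (card ` M)" by (metis imageE)
  have Zmax: "card Z' \<le> card Z" if "Z' \<in> M" for Z'
  proof -
    have "card Z' \<in> card ` M" using that by blast
    then have "card Z' \<le> Max (card ` M)" using fM by (intro Max_ge) simp_all
    then show ?thesis using Z(2) by simp
  qed
  have ZX: "Z \<subseteq> X" "Y \<inter> Z = {}" "indepC F (Y \<union> Z)" using Z(1) unfolding M_def by blast+
  have fZ: "finite Z" using ZX(1) X finite_subset by blast
  have "X \<subseteq> Cl F (Y \<union> Z)"
  proof
    fix h assume h: "h \<in> X"
    show "h \<in> Cl F (Y \<union> Z)"
    proof (cases "h \<in> Y \<union> Z")
      case True
      then show ?thesis using gen_sub_Cl[OF F, of "Y \<union> Z"] gen_alg.base_G[of h "Y \<union> Z" F] by blast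
    next
      case False
      show ?thesis
      proof (rule ccontr)
        assume "h \<notin> Cl F (Y \<union> Z)"
        then have na: "\<not> alg (gen_alg F (Y \<union> Z)) h" unfolding Cl_def by simp
        have fYZ: "finite (Y \<union> Z)" using Y(1) fZ by simp
        have "indepC F (insert h (Y \<union> Z))" by (rule bridge_left[OF F fYZ False ZX(3) na])
        then have i2: "indepC F (Y \<union> insert h Z)" by simp
        have "insert h Z \<subseteq> X" "Y \<inter> insert h Z = {}" using ZX(1,2) h False by blast+
        then have "insert h Z \<in> M" unfolding M_def using i2 by blast
        then have "card (insert h Z) \<le> card Z" by (rule Zmax)
        moreover have "card (insert h Z) = Suc (card Z)" using fZ False by simp
        ultimately show False by simp
      qed
    qed
  qed
  then show ?thesis using ZX by blast
qed

lemma claim1: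
  fixes F :: "'a::idom set"
  assumes F: "subr F" and Y: "finite Y" and Z: "finite Z" and d: "Y \<inter> Z = {}" and i: "indepC F (Y \<union> Z)"
  shows "indepC (Cl F Y) Z"
  using Z d i
proof (induction Z rule: finite_induct)
  case empty show ?case by (rule indep_empty)
next
  case (insert z Z)
  have iZ: "indepC F (Y \<union> Z)" by (rule indep_mono_set[OF _ _ insert(5)]) (use Y insert(1) in auto)
  have IH: "indepC (Cl F Y) Z" using insert(3)[OF _ iZ] insert(4) by blast
  have zn: "z \<notin> Y \<union> Z" using insert(2,4) by blast
  have na: "\<not> alg (gen_alg (Cl F Y) Z) z"
  proof
    assume a: "alg (gen_alg (Cl F Y) Z) z"
    have "gen_alg (Cl F Y) Z \<subseteq> Cl F (Y \<union> Z)"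
    proof (rule gen_alg_sub[OF subr_Cl[OF F]])
      show "Cl F Y \<subseteq> Cl F (Y \<union> Z)" by (rule Cl_mono) auto
      show "Z \<subseteq> Cl F (Y \<union> Z)" using gen_sub_Cl[OF F, of "Y \<union> Z"] gen_alg_base_sub(2)[of "Y \<union> Z" F] by blast
    qed
    then have "alg {x. alg (gen_alg F (Y \<union> Z)) x} z" using alg_mono[OF _ a] unfolding Cl_def by blast
    then have "alg (gen_alg F (Y \<union> Z)) z" by (rule trans_full[OF gen_alg_subr[OF subrD(2)[OF F]]])
    moreover have "\<not> alg (gen_alg F (Y \<union> Z)) z"
      by (rule bridge_right[OF F _ zn]) (use Y insert(1) insert(5) in simp_all)
    ultimately show False by simp
  qed
  show ?case by (rule bridge_left[OF subr_Cl[OF F] insert(1,2) IH na])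
qed

lemma Fspan_mem: assumes "(1::'a::idom) \<in> F" "v \<in> S" shows "v \<in> Fspan F S"
  unfolding Fspan_def using assms
  by (intro CollectI exI[of _ "1::nat"] exI[of _ "\<lambda>_. 1"] exI[of _ "\<lambda>_. v"]) auto

lemma Fspan_sub: assumes "subr D" "F \<subseteq> D" "S \<subseteq> D" shows "Fspan F S \<subseteq> D"
proof
  fix x assume "x \<in> Fspan F S"
  then have "\<exists>(n::nat) c v. (\<forall>i<n. c i \<in> F \<and> v i \<in> S) \<and> x = (\<Sum>i<n. c i * v i)"
    unfolding Fspan_def by simp
  then obtain n :: nat and c v where h: "\<forall>i<n. c i \<in> F \<and> v i \<in> S" "x = (\<Sum>i<n. c i * v i)"
    by blast
  show "x \<in> D" unfolding h(2)
    by (rule subr_sum[OF assms(1)], rule subrD(4)[OF assms(1)]) (use h(1) assms(2,3) in auto)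
qed

lemma Sup_eq_cross:
  fixes A B :: "'c::complete_lattice set"
  assumes "\<And>a. a \<in> A \<Longrightarrow> \<exists>b\<in>B. a \<le> b" "\<And>b. b \<in> B \<Longrightarrow> \<exists>a\<in>A. b \<le> a"
  shows "Sup A = Sup B"
proof (rule antisym)
  show "Sup A \<le> Sup B"
  proof (rule Sup_least)
    fix a assume "a \<in> A"
    then obtain b where "b \<in> B" "a \<le> b" using assms(1) by blast
    then show "a \<le> Sup B" using Sup_upper order_trans by blast
  qed
  show "Sup B \<le> Sup A"
  proof (rule Sup_least)
    fix b assume "b \<in> B"
    then obtain a where "a \<in> A" "b \<le> a" using assms(2) by blast
    then show "b \<le> Sup A" using Sup_upper order_trans by blast
  qed
qed


context agd
begin

lemma Hex: "\<exists>H. finite H \<and> gen_alg F H = UNIV \<and> (\<forall>h\<in>H. h \<noteq> 0 \<and> ini h = h)"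
proof -
  obtain G where G: "finite G" "gen_alg F G = UNIV" using fingen by blast
  define H where "H = (\<Union>g\<in>G. hc g ` {k. hc g k \<noteq> 0})"
  have fH: "finite H" unfolding H_def using G(1) hc_spec by blast
  have hH: "h \<noteq> 0 \<and> ini h = h" if hin: "h \<in> H" for h
  proof -
    obtain g k where gk: "h = hc g k" "hc g k \<noteq> 0" using hin unfolding H_def by blast
    show ?thesis using ini_hom[OF hc_in[of g k]] gk by simp
  qed
  have F1: "1 \<in> F" by (rule subrD(2)[OF subr_F])
  have GH: "G \<subseteq> gen_alg F H"
  proof
    fix g assume g: "g \<in> G"
    have "g = (\<Sum>k\<in>{k. hc g k \<noteq> 0}. hc g k)" using hc_spec by blast
    also have "\<dots> \<in> gen_alg F H"
      by (rule subr_sum[OF gen_alg_subr[OF F1]]) (use g in \<open>auto simp: H_def intro: gen_alg.base_G\<close>)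
    finally show "g \<in> gen_alg F H" .
  qed
  have "gen_alg F G \<subseteq> gen_alg F H"
    by (rule gen_alg_sub[OF gen_alg_subr[OF F1]]) (use GH gen_alg_base_sub in auto)
  then have "gen_alg F H = UNIV" using G(2) by blast
  then show ?thesis using fH hH by blast
qed

lemma lift_indep:
  fixes v :: "'i \<Rightarrow> 'a"
  assumes I: "finite I" and nz: "\<And>i. i \<in> I \<Longrightarrow> v i \<noteq> 0"
    and Ct: "\<And>c. c \<in> C \<Longrightarrow> ini c \<in> Ct" and ind: "indepF Ct I (\<lambda>i. ini (v i))"
  shows "indepF C I v"
proof (rule indepFI)
  fix E c e0
  assume E: "finite E" and sp: "\<And>e i. e \<in> E \<Longrightarrow> i \<notin> I \<Longrightarrow> e i = 0"
    and cC: "\<And>e. e \<in> E \<Longrightarrow> c e \<in> C" and s0: "(\<Sum>e\<in>E. c e * (\<Prod>i\<in>I. v i ^ e i)) = 0" and e0: "e0 \<in> E"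
  define E' where "E' = {e\<in>E. c e \<noteq> 0}"
  define t where "t e = c e * (\<Prod>i\<in>I. v i ^ e i)" for e
  have fE': "finite E'" unfolding E'_def using E by simp
  have pnz: "(\<Prod>i\<in>I. v i ^ e i) \<noteq> 0 \<and> ini (\<Prod>i\<in>I. v i ^ e i) = (\<Prod>i\<in>I. ini (v i) ^ e i)" for e
  proof -
    have "(\<Prod>i\<in>I. v i ^ e i) \<noteq> 0 \<and> ini (\<Prod>i\<in>I. v i ^ e i) = (\<Prod>i\<in>I. ini (v i ^ e i))"
      by (rule prod_lowest[OF I]) (use power_lowest nz in blast)
    moreover have "(\<Prod>i\<in>I. ini (v i ^ e i)) = (\<Prod>i\<in>I. ini (v i) ^ e i)"
      by (rule prod.cong[OF refl]) (use power_lowest nz in blast)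
    ultimately show ?thesis by simp
  qed
  have tnz: "t e \<noteq> 0" and tini: "ini (t e) = ini (c e) * (\<Prod>i\<in>I. ini (v i) ^ e i)" if "e \<in> E'" for e
  proof -
    have "c e \<noteq> 0" using that unfolding E'_def by blast
    then show "t e \<noteq> 0" "ini (t e) = ini (c e) * (\<Prod>i\<in>I. ini (v i) ^ e i)"
      unfolding t_def using mult_lowest[of "c e" "\<Prod>i\<in>I. v i ^ e i"] pnz[of e] by auto
  qed
  show "c e0 = 0"
  proof (rule ccontr)
    assume c0: "c e0 \<noteq> 0"
    then have ne: "E' \<noteq> {}" unfolding E'_def using e0 by blast
    have "(\<Sum>e\<in>E'. t e) = (\<Sum>e\<in>E. t e)"
      by (rule sum.mono_neutral_left[OF E]) (auto simp: E'_def t_def)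
    then have sE': "(\<Sum>e\<in>E'. t e) = 0" using s0 unfolding t_def by simp
    define d0 where "d0 = Min (ordd ` t ` E')"
    define E0 where "E0 = {e\<in>E'. ordd (t e) = d0}"
    have E0ne: "E0 \<noteq> {}" unfolding E0_def d0_def by (rule lowest_ex[OF fE' ne])
    have "hc (\<Sum>e\<in>E'. t e) d0 = (\<Sum>e\<in>E0. ini (t e))"
      unfolding E0_def d0_def by (rule lowest_sum[OF fE' ne tnz])
    then have "(\<Sum>e\<in>E0. ini (t e)) = 0" using sE' hc_zero by simp
    then have s1: "(\<Sum>e\<in>E0. ini (c e) * (\<Prod>i\<in>I. ini (v i) ^ e i)) = 0"
      using tini unfolding E0_def by simp
    obtain e1 where e1: "e1 \<in> E0" using E0ne by blast
    have "ini (c e1) = 0"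
    proof (rule indepFD[OF ind _ _ _ s1 e1])
      show "finite E0" unfolding E0_def using fE' by simp
      show "e i = 0" if "e \<in> E0" "i \<notin> I" for e i
        using sp[of e i] that unfolding E0_def E'_def by blast
      show "ini (c e) \<in> Ct" if "e \<in> E0" for e
        using Ct[OF cC[of e]] that unfolding E0_def E'_def by blast
    qed
    moreover have "c e1 \<noteq> 0" using e1 unfolding E0_def E'_def by blast
    ultimately show False using ini_nz by blast
  qed
qed

lemma main:
  assumes Rsub: "is_subalgebra F R"
  shows "trdeg F (Fspan F (ini ` R)) = trdeg F R"
proof -
  have FR: "F \<subseteq> R" and Rcl: "\<And>x y. x \<in> R \<Longrightarrow> y \<in> R \<Longrightarrow> x + y \<in> R \<and> x * y \<in> R \<and> - x \<in> R"
    using Rsub unfolding is_subalgebra_def by blast+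
  have F0: "0 \<in> F" and F1: "1 \<in> F" using subrD[OF subr_F] by blast+
  have subrR: "subr R" unfolding subr_def using FR F0 F1 Rcl by blast
  define Rt where "Rt = Fspan F (ini ` R)"
  obtain H where H: "finite H" "gen_alg F H = UNIV" "\<And>h. h \<in> H \<Longrightarrow> h \<noteq> 0 \<and> ini h = h"
    using Hex by blast
  obtain B where B: "B \<subseteq> H" "indepC F B" "H \<subseteq> Cl F B"
    using maxext[OF subr_F H(1) finite.emptyI indep_empty] by auto
  have fB: "finite B" using B(1) H(1) finite_subset by blast
  have UCl: "UNIV \<subseteq> Cl F W" if "H \<subseteq> Cl F W" for W
  proof -
    have "gen_alg F H \<subseteq> Cl F W"
      by (rule gen_alg_sub[OF subr_Cl[OF subr_F]]) (use that gen_sub_Cl[OF subr_F, of W] gen_alg_base_sub(1)[of F W] in blast)+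
    then show ?thesis using H(2) by simp
  qed
  have bound: "card U \<le> card B" if "finite U" "indepC F U" for U
    by (rule steinitz[OF subr_F fB B(2) that]) (use UCl[OF B(3)] in blast)
  define M where "M = {Y. finite Y \<and> Y \<subseteq> ini ` R \<and> indepC F Y}"
  have eM: "{} \<in> M" unfolding M_def using indep_empty by blast
  have cM: "card ` M \<subseteq> {..card B}" unfolding M_def using bound by auto
  have fcM: "finite (card ` M)" using finite_subset[OF cM] by simp
  have "Max (card ` M) \<in> card ` M" using fcM eM by (intro Max_in) auto
  then obtain Y where Y: "Y \<in> M" "card Y = Max (card ` M)" by (metis imageE)
  have Ymax: "card Y' \<le> card Y" if "Y' \<in> M" for Y'
  proof -
    have "card Y' \<in> card ` M" using that by blast
    then have "card Y' \<le> Max (card ` M)" using fcM by (intro Max_ge) simp_all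
    then show ?thesis using Y(2) by simp
  qed
  have fY: "finite Y" and YR: "Y \<subseteq> ini ` R" and iY: "indepC F Y" using Y(1) unfolding M_def by blast+
  have iniCl: "ini ` R \<subseteq> Cl F Y"
  proof
    fix h assume h: "h \<in> ini ` R"
    show "h \<in> Cl F Y"
    proof (cases "h \<in> Y")
      case True
      then show ?thesis using gen_sub_Cl[OF subr_F, of Y] gen_alg.base_G[of h Y F] by blast
    next
      case False
      show ?thesis
      proof (rule ccontr)
        assume "h \<notin> Cl F Y"
        then have na: "\<not> alg (gen_alg F Y) h" unfolding Cl_def by simp
        have "indepC F (insert h Y)" by (rule bridge_left[OF subr_F fY False iY na])
        then have "insert h Y \<in> M" unfolding M_def using fY YR h by blast
        then have "card (insert h Y) \<le> card Y" by (rule Ymax)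
        moreover have "card (insert h Y) = Suc (card Y)" using fY False by simp
        ultimately show False by simp
      qed
    qed
  qed
  have FCl: "F \<subseteq> Cl F Y" using gen_sub_Cl[OF subr_F, of Y] gen_alg_base_sub(1)[of F Y] by blast
  have RtCl: "Rt \<subseteq> Cl F Y" unfolding Rt_def by (rule Fspan_sub[OF subr_Cl[OF subr_F] FCl iniCl])
  have YRt: "Y \<subseteq> Rt" unfolding Rt_def using YR Fspan_mem[OF F1] by blast
  have Ynz: "0 \<notin> Y" by (rule indep_no_zero[OF fY iY F1])
  have iniRt: "ini c \<in> Rt" if "c \<in> R" for c unfolding Rt_def using Fspan_mem[OF F1] that by blast
  have dir1: "\<exists>S'. finite S' \<and> S' \<subseteq> R \<and> alg_indep F S' \<and> card S \<le> card S'"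
    if S: "finite S" "S \<subseteq> Rt" "alg_indep F S" for S
  proof -
    have iS: "indepC F S" using S(3) alg_indep_iff[OF S(1)] by blast
    have cS: "card S \<le> card Y"
      by (rule steinitz[OF subr_F fY iY S(1) iS]) (use S(2) RtCl in blast)
    have "\<forall>y. \<exists>r. y \<in> Y \<longrightarrow> r \<in> R \<and> ini r = y" using YR by blast
    from choice[OF this] obtain rr where rr: "\<And>y. y \<in> Y \<Longrightarrow> rr y \<in> R \<and> ini (rr y) = y" by blast
    have rnz: "rr y \<noteq> 0" if "y \<in> Y" for y
    proof
      assume "rr y = 0"
      then have "y = 0" using rr[OF that] by simp
      then show False using Ynz that by simp
    qed
    have inj: "inj_on rr Y" by (rule inj_onI) (metis rr)
    have "indepF F Y (\<lambda>y. ini (rr y))" using iY indepF_id[of F Y] indepF_cong[of Y "\<lambda>y. ini (rr y)" "\<lambda>y. y" F] rr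
      by blast
    note indFY = this
    have CtF: "ini c \<in> F" if "c \<in> F" for c using ini_F[OF that] that by simp
    have "indepF F Y rr" using lift_indep[of Y rr F F, OF fY rnz CtF indFY] .
    then have "indepC F (rr ` Y)" by (rule indepF_image[OF fY inj])
    moreover have "card (rr ` Y) = card Y" using card_image[OF inj] .
    moreover have "rr ` Y \<subseteq> R" using rr by blast
    ultimately show ?thesis using cS fY alg_indep_iff[of "rr ` Y" F]
      by (intro exI[of _ "rr ` Y"]) auto
  qed
  have dir2: "\<exists>S'. finite S' \<and> S' \<subseteq> Rt \<and> alg_indep F S' \<and> card S \<le> card S'"
    if S: "finite S" "S \<subseteq> R" "alg_indep F S" for S
  proof -
    have iS: "indepC F S" using S(3) alg_indep_iff[OF S(1)] by blast
    obtain Z where Z: "Z \<subseteq> H" "Y \<inter> Z = {}" "indepC F (Y \<union> Z)" "H \<subseteq> Cl F (Y \<union> Z)"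
      using maxext[OF subr_F H(1) fY iY] by blast
    have fZ: "finite Z" using Z(1) H(1) finite_subset by blast
    have c1: "indepC (Cl F Y) Z" by (rule claim1[OF subr_F fY fZ Z(2,3)])
    have "indepC Rt Z" by (rule indep_mono_coef[OF RtCl c1])
    then have "indepF Rt Z (\<lambda>z. ini z)"
      using indepF_id[of Rt Z] indepF_cong[of Z "\<lambda>z. ini z" "\<lambda>z. z" Rt] H(3) Z(1) by blast
    note indZ = this
    have nzZ: "z \<noteq> 0" if "z \<in> Z" for z using H(3) Z(1) that by blast
    have "indepF R Z (\<lambda>z. z)" using lift_indep[of Z "\<lambda>z. z" R Rt, OF fZ nzZ iniRt] indZ by simp
    then have iZR: "indepC R Z" using indepF_id by blast
    have SZ: "S \<inter> Z = {}"
    proof (rule ccontr)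
      assume "S \<inter> Z \<noteq> {}"
      then obtain s where s: "s \<in> S" "s \<in> Z" by blast
      have "insert s (Z - {s}) = Z" using s(2) by blast
      then have "indepC R (insert s (Z - {s}))" using iZR by simp
      moreover have "finite (Z - {s})" using fZ by simp
      moreover have "s \<notin> Z - {s}" by simp
      ultimately have "\<not> alg (gen_alg R (Z - {s})) s" using bridge_right[OF subrR] by blast
      moreover have "s \<in> gen_alg R (Z - {s})" using s(1) S(2) by (blast intro: gen_alg.base_F)
      ultimately show False using alg_base[OF gen_alg_subr[OF subrD(2)[OF subrR]]] by blast
    qed
    have iSZ: "indepC F (S \<union> Z)"
    proof (rule split_indep[OF S(1) fZ SZ iS iZR F1])
      show "gen_alg F S \<subseteq> R" by (rule gen_alg_sub[OF subrR FR S(2)])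
    qed
    have "card (S \<union> Z) \<le> card (Y \<union> Z)"
    proof (rule steinitz[OF subr_F _ Z(3)])
      show "finite (Y \<union> Z)" using fY fZ by simp
      show "finite (S \<union> Z)" using S(1) fZ by simp
      show "indepC F (S \<union> Z)" by (rule iSZ)
      show "S \<union> Z \<subseteq> Cl F (Y \<union> Z)" using UCl[OF Z(4)] by blast
    qed
    then have "card S + card Z \<le> card Y + card Z"
      using card_Un_disjoint[OF S(1) fZ SZ] card_Un_disjoint[OF fY fZ Z(2)] by simp
    then have "card S \<le> card Y" by simp
    then show ?thesis using fY YRt iY alg_indep_iff[OF fY] by blast
  qed
  show ?thesis
    unfolding trdeg_def Rt_def[symmetric]
  proof (rule Sup_eq_cross)
    fix a assume "a \<in> {enat (card S) |S. finite S \<and> S \<subseteq> Rt \<and> alg_indep F S}"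
    then obtain S where S: "a = enat (card S)" "finite S" "S \<subseteq> Rt" "alg_indep F S" by blast
    then obtain S' where "finite S'" "S' \<subseteq> R" "alg_indep F S'" "card S \<le> card S'" using dir1 by blast
    then show "\<exists>b\<in>{enat (card S) |S. finite S \<and> S \<subseteq> R \<and> alg_indep F S}. a \<le> b"
      using S(1) by (intro bexI[of _ "enat (card S')"]) auto
  next
    fix b assume "b \<in> {enat (card S) |S. finite S \<and> S \<subseteq> R \<and> alg_indep F S}"
    then obtain S where S: "b = enat (card S)" "finite S" "S \<subseteq> R" "alg_indep F S" by blast
    then obtain S' where "finite S'" "S' \<subseteq> Rt" "alg_indep F S'" "card S \<le> card S'" using dir2 by blast
    then show "\<exists>a\<in>{enat (card S) |S. finite S \<and> S \<subseteq> Rt \<and> alg_indep F S}. b \<le> a"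
      using S(1) by (intro bexI[of _ "enat (card S')"]) auto
  qed
qed

end

theorem proposition1p5:
  fixes Ak :: "nat \<Rightarrow> 'a::idom set" and R :: "'a set"
  assumes "affine_graded_domain Ak"
    and "is_subalgebra (Ak 0) R"
  shows "trdeg (Ak 0) (Fspan (Ak 0) (initial Ak ` R)) = trdeg (Ak 0) R"
proof -
  interpret agd Ak by (rule agd.intro[OF assms(1)])
  show ?thesis by (rule main[OF assms(2)])
qed


end
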